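(* Let $\mathsf{Y}$ be a finite set, $s:\mathsf{Y}\to\mathbb{R}$, $\mathcal{S}=\sup_{x}|s(x)|$, $q_\theta(x)=\exp(\theta s(x))$, $Z(\theta)=\sum_xq_\theta(x)$, $f(x|\theta)=q_\theta(x)/Z(\theta)$ for $\theta\in\Theta=\mathbb{R}$. Fix observed $y\in\mathsf{Y}$ and the Gaussian prior $\theta\sim\mathcal{N}(0,\sigma_0^2)$, and let $\pi(\theta|y)\propto\pi(\theta)f(y|\theta)$. Let $\Sigma>0$ and let $P_\Sigma$ be the discretized Langevin kernel $\theta'=\theta+\frac\Sigma2\nabla\log\pi(\theta|y)+\eta$, $\eta\sim\mathcal{N}(0,\Sigma)$, where $\nabla\log\pi(\theta|y)=-\theta/\sigma_0^2+s(y)-\mathbb{E}_{x\sim f(\cdot|\theta)}[s(x)]$. For $N\ge1$ let $\hat P_{\Sigma,N}$ be the noisy kernel: draw $y'_1,\dots,y'_N$ i.i.d. from $f(\cdot|\theta)$ and set $\theta'=\theta+\frac\Sigma2\big(-\theta/\sigma_0^2+s(y)-\frac1N\sum_{i=1}^Ns(y'_i)\big)+\eta$, $\eta\sim\mathcal{N}(0,\Sigma)$. If $\Sigma<\sigma_0^2$, then the chain with kernel $P_\Sigma$ is geometrically ergodic with some limiting distribution $\pi_\Sigma$; moreover, for all $N$ large enough the chain with kernel $\hat P_{\Sigma,N}$ is geometrically ergodic with some limiting distribution $\pi_{\Sigma,N}$, and $\|\pi_\Sigma-\pi_{\Sigma,N}\|\to0$ as $N\to\infty$.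
   Context: $\|\mu-\nu\|=\sup_A|\mu(A)-\nu(A)|$ is the total variation distance. $f(\cdot|\theta)$ is a one-parameter Gibbs random field. A chain is geometrically ergodic if it has an invariant distribution to which the $n$-step laws converge in total variation at a geometric rate (possibly depending on the starting point). *)

theory Defs
  imports "HOL-Probability.Probability"
begin

primrec kernel_iter :: "(real \<Rightarrow> real measure) \<Rightarrow> nat \<Rightarrow> real \<Rightarrow> real measure" where
  "kernel_iter K 0 x = return borel x"
| "kernel_iter K (Suc n) x = bind (kernel_iter K n x) K"

definition tv_dist :: "real measure \<Rightarrow> real measure \<Rightarrow> real" where
  "tv_dist \<mu> \<nu> = (SUP A \<in> sets (borel :: real measure). \<bar>measure \<mu> A - measure \<nu> A\<bar>)"

definition geom_ergodic_to :: "(real \<Rightarrow> real measure) \<Rightarrow> real measure \<Rightarrow> bool" where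
  "geom_ergodic_to K \<pi> \<longleftrightarrow>
     prob_space \<pi> \<and> sets \<pi> = sets borel \<and> bind \<pi> K = \<pi> \<and>
     (\<exists>\<rho>::real. 0 \<le> \<rho> \<and> \<rho> < 1 \<and>
        (\<forall>x. \<exists>C::real. \<forall>n. tv_dist (kernel_iter K n x) \<pi> \<le> C * \<rho> ^ n))"

definition geom_ergodic :: "(real \<Rightarrow> real measure) \<Rightarrow> bool" where
  "geom_ergodic K \<longleftrightarrow> (\<exists>\<pi>. geom_ergodic_to K \<pi>)"

definition gibbs_Z :: "'a set \<Rightarrow> ('a \<Rightarrow> real) \<Rightarrow> real \<Rightarrow> real" where
  "gibbs_Z Y s \<theta> = (\<Sum>x\<in>Y. exp (\<theta> * s x))"

definition gibbs_f :: "'a set \<Rightarrow> ('a \<Rightarrow> real) \<Rightarrow> 'a \<Rightarrow> real \<Rightarrow> real" where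
  "gibbs_f Y s x \<theta> = exp (\<theta> * s x) / gibbs_Z Y s \<theta>"

definition gibbs_mean :: "'a set \<Rightarrow> ('a \<Rightarrow> real) \<Rightarrow> real \<Rightarrow> real" where
  "gibbs_mean Y s \<theta> = (\<Sum>x\<in>Y. s x * gibbs_f Y s x \<theta>)"

text \<open>grad log pi(theta|y) = -theta/sigma0^2 + s(y) - E_{f(.|theta)}[s], for the prior N(0, sigma0^2).\<close>
definition grad_log_post :: "'a set \<Rightarrow> ('a \<Rightarrow> real) \<Rightarrow> 'a \<Rightarrow> real \<Rightarrow> real \<Rightarrow> real" where
  "grad_log_post Y s y \<sigma>0 \<theta> = - \<theta> / \<sigma>0\<^sup>2 + s y - gibbs_mean Y s \<theta>"

definition langevin_kernel :: "'a set \<Rightarrow> ('a \<Rightarrow> real) \<Rightarrow> 'a \<Rightarrow> real \<Rightarrow> real \<Rightarrow> real \<Rightarrow> real measure" where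
  "langevin_kernel Y s y \<sigma>0 \<Sigma> \<theta> =
     density lborel (\<lambda>t. ennreal (normal_density
        (\<theta> + \<Sigma> / 2 * grad_log_post Y s y \<sigma>0 \<theta>) (sqrt \<Sigma>) t))"

text \<open>Its law is the finite mixture over all draws ys in Y^N, weighted by prod f(ys i|theta).\<close>
definition noisy_langevin_kernel ::
  "'a set \<Rightarrow> ('a \<Rightarrow> real) \<Rightarrow> 'a \<Rightarrow> real \<Rightarrow> real \<Rightarrow> nat \<Rightarrow> real \<Rightarrow> real measure" where
  "noisy_langevin_kernel Y s y \<sigma>0 \<Sigma> N \<theta> =
     density lborel (\<lambda>t. ennreal
       (\<Sum>ys \<in> PiE {..<N} (\<lambda>_. Y).
          (\<Prod>i<N. gibbs_f Y s (ys i) \<theta>) *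
          normal_density
            (\<theta> + \<Sigma> / 2 * (- \<theta> / \<sigma>0\<^sup>2 + s y - (\<Sum>i<N. s (ys i)) / real N))
            (sqrt \<Sigma>) t))"

end

theory Submission
  imports Defs
begin

definition Kd :: "(real \<Rightarrow> real \<Rightarrow> real) \<Rightarrow> real \<Rightarrow> real measure" where
  "Kd k \<theta> = density lborel (\<lambda>t. ennreal (k \<theta> t))"

definition Pop :: "(real \<Rightarrow> real \<Rightarrow> real) \<Rightarrow> (real \<Rightarrow> real) \<Rightarrow> real \<Rightarrow> real" where
  "Pop k \<phi> \<theta> = (\<integral>t. k \<theta> t * \<phi> t \<partial>lborel)"

definition bm :: "real \<Rightarrow> (real \<Rightarrow> real) \<Rightarrow> bool" where
  "bm B \<phi> \<longleftrightarrow> \<phi> \<in> borel_measurable borel \<and> (\<forall>t. \<bar>\<phi> t\<bar> \<le> B)"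

lemma integrable_mult_bm:
  assumes "integrable lborel r" "bm B \<phi>"
  shows "integrable lborel (\<lambda>t. r t * \<phi> t)"
proof -
  have [measurable]: "\<phi> \<in> borel_measurable borel" using assms(2) by (simp add: bm_def)
  show ?thesis
  proof (rule Bochner_Integration.integrable_bound[where f="\<lambda>t. B * r t"])
    show "integrable lborel (\<lambda>t. B * r t)" using assms(1) by simp
    show "AE x in lborel. norm (r x * \<phi> x) \<le> norm (B * r x)"
    proof (rule AE_I2)
      fix x
      have "\<bar>\<phi> x\<bar> \<le> B" using assms(2) by (simp add: bm_def)
      then have "\<bar>r x\<bar> * \<bar>\<phi> x\<bar> \<le> \<bar>r x\<bar> * \<bar>B\<bar>"
        by (intro mult_left_mono) auto
      then show "norm (r x * \<phi> x) \<le> norm (B * r x)" by (simp add: abs_mult mult.commute)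
    qed
  qed (use assms in \<open>auto simp: bm_def\<close>)
qed

locale dkernel =
  fixes k :: "real \<Rightarrow> real \<Rightarrow> real"
  assumes k_meas[measurable]: "case_prod k \<in> borel_measurable (borel \<Otimes>\<^sub>M borel)"
    and k_nonneg: "\<And>\<theta> t. 0 \<le> k \<theta> t"
    and k_int: "\<And>\<theta>. integrable lborel (k \<theta>)"
    and k_one: "\<And>\<theta>. (\<integral>t. k \<theta> t \<partial>lborel) = 1"
begin

lemma k_meas_lborel[measurable]: "case_prod k \<in> borel_measurable (borel \<Otimes>\<^sub>M lborel)"
  using k_meas by (simp add: measurable_def space_pair_measure sets_pair_measure)
   
lemma k_meas1[measurable]: "k \<theta> \<in> borel_measurable borel"
  by measurable

lemma sets_Kd[simp]: "sets (Kd k \<theta>) = sets borel"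
  by (simp add: Kd_def)

lemma space_Kd[simp]: "space (Kd k \<theta>) = UNIV"
  by (simp add: Kd_def)

lemma prob_Kd: "prob_space (Kd k \<theta>)"
proof
  have "emeasure (Kd k \<theta>) (space (Kd k \<theta>)) = (\<integral>\<^sup>+t. ennreal (k \<theta> t) \<partial>lborel)"
    by (simp add: Kd_def emeasure_density)
  also have "\<dots> = ennreal (\<integral>t. k \<theta> t \<partial>lborel)"
    by (rule nn_integral_eq_integral) (auto simp: k_int k_nonneg)
  finally show "emeasure (Kd k \<theta>) (space (Kd k \<theta>)) = 1" by (simp add: k_one)
qed

lemma emeasure_Kd_UNIV[simp]: "emeasure (Kd k \<theta>) UNIV = 1"
  using prob_space.emeasure_space_1[OF prob_Kd, of \<theta>] by simp

lemma Kd_meas[measurable]: "Kd k \<in> borel \<rightarrow>\<^sub>M prob_algebra borel"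
proof (rule measurable_prob_algebraI)
  show "prob_space (Kd k x)" for x by (rule prob_Kd)
  show "Kd k \<in> borel \<rightarrow>\<^sub>M subprob_algebra borel"
  proof (rule measurable_subprob_algebra)
    show "subprob_space (Kd k a)" for a using prob_Kd prob_space_imp_subprob_space by blast
    show "sets (Kd k a) = sets borel" for a by simp
    fix A :: "real set" assume A: "A \<in> sets borel"
    have "(\<lambda>a. emeasure (Kd k a) A) = (\<lambda>a. \<integral>\<^sup>+t. ennreal (k a t) * indicator A t \<partial>lborel)"
      using A by (simp add: Kd_def emeasure_density)
    also have "\<dots> \<in> borel_measurable borel"
      using A by measurable
    finally show "(\<lambda>a. emeasure (Kd k a) A) \<in> borel_measurable borel" .
  qed
qed

lemma Kd_meas_sub[measurable]: "Kd k \<in> borel \<rightarrow>\<^sub>M subprob_algebra borel"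
  using Kd_meas measurable_prob_algebraD by blast

lemma Pop_meas[measurable]:
  assumes [measurable]: "\<phi> \<in> borel_measurable borel"
  shows "Pop k \<phi> \<in> borel_measurable borel"
  unfolding Pop_def by measurable

lemma int_Kd:
  assumes [measurable]: "\<phi> \<in> borel_measurable borel"
  shows "(\<integral>t. \<phi> t \<partial>Kd k \<theta>) = Pop k \<phi> \<theta>"
  unfolding Kd_def Pop_def
  by (subst integral_density) (auto simp: k_nonneg)

lemma Pop_int: "bm B \<phi> \<Longrightarrow> integrable lborel (\<lambda>t. k \<theta> t * \<phi> t)"
  by (rule integrable_mult_bm[OF k_int])

lemma Pop_bound:
  assumes "bm B \<phi>" shows "\<bar>Pop k \<phi> \<theta>\<bar> \<le> B"
proof -
  have "\<bar>Pop k \<phi> \<theta>\<bar> \<le> (\<integral>t. B * k \<theta> t \<partial>lborel)"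
    unfolding Pop_def
    apply (rule integral_abs_bound_integral)
    using assms k_int k_nonneg Pop_int[OF assms]
    by (auto simp: bm_def abs_mult mult.commute[of B] intro!: mult_left_mono)
  also have "\<dots> = B" by (simp add: k_one)
  finally show ?thesis .
qed

lemma bm_Pop: "bm B \<phi> \<Longrightarrow> bm B (Pop k \<phi>)"
  using Pop_bound by (auto simp: bm_def)

lemma bm_Pn: "bm B \<phi> \<Longrightarrow> bm B ((Pop k ^^ n) \<phi>)"
  by (induction n) (auto intro: bm_Pop)

lemma Pop_indicator:
  assumes "A \<in> sets borel" shows "Pop k (indicator A) \<theta> = measure (Kd k \<theta>) A"
proof -
  interpret prob_space "Kd k \<theta>" by (rule prob_Kd)
  have "Pop k (indicator A) \<theta> = (\<integral>t. indicator A t \<partial>Kd k \<theta>)"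
    using assms by (subst int_Kd) auto
  also have "\<dots> = measure (Kd k \<theta>) A" by simp
  finally show ?thesis .
qed

lemma iter_prob: "kernel_iter (Kd k) n x \<in> space (prob_algebra borel)"
proof (induction n)
  case 0
  then show ?case by (auto simp: space_prob_algebra prob_space_return)
next
  case (Suc n)
  then show ?case
    using prob_space_bind'[OF Suc Kd_meas] sets_bind'[OF Suc Kd_meas]
    by (simp add: space_prob_algebra)
qed

lemma iter_prob': "prob_space (kernel_iter (Kd k) n x)" "sets (kernel_iter (Kd k) n x) = sets borel"
  using iter_prob[of n x] by (auto simp: space_prob_algebra)

lemma iter_int:
  assumes "bm B \<psi>"
  shows "(\<integral>t. \<psi> t \<partial>kernel_iter (Kd k) n x) = (Pop k ^^ n) \<psi> x"
  using assms
proof (induction n arbitrary: \<psi>)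
  case 0
  then show ?case by (simp add: bm_def integral_return)
next
  case (Suc n)
  have [measurable]: "\<psi> \<in> borel_measurable borel" using Suc.prems by (simp add: bm_def)
  interpret M: prob_space "kernel_iter (Kd k) n x" by (rule iter_prob')
  have "(\<integral>t. \<psi> t \<partial>kernel_iter (Kd k) (Suc n) x) = (\<integral>\<theta>. (\<integral>t. \<psi> t \<partial>Kd k \<theta>) \<partial>kernel_iter (Kd k) n x)"
    apply simp
    apply (rule integral_bind[where K=borel and B=B and B'=1])
    using Suc.prems iter_prob'[of n x]
    by (auto simp: bm_def measurable_cong_sets[OF iter_prob'(2) refl] M.finite_measure_axioms
        intro!: AE_I2)
  also have "\<dots> = (\<integral>\<theta>. Pop k \<psi> \<theta> \<partial>kernel_iter (Kd k) n x)"
    by (simp add: int_Kd)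
  also have "\<dots> = (Pop k ^^ n) (Pop k \<psi>) x"
    by (rule Suc.IH[OF bm_Pop[OF Suc.prems]])
  also have "\<dots> = (Pop k ^^ Suc n) \<psi> x"
    by (simp add: funpow_Suc_right del: funpow.simps)
  finally show ?case .
qed

lemma iter_measure:
  assumes "A \<in> sets borel"
  shows "measure (kernel_iter (Kd k) n x) A = (Pop k ^^ n) (indicator A) x"
proof -
  have "bm 1 (indicator A)" using assms by (auto simp: bm_def)
  from iter_int[OF this, of n x] show ?thesis
    using iter_prob'(2)[of n x] by (simp add: sets_eq_imp_space_eq[OF iter_prob'(2)])
qed

end

lemma coupling:
  fixes r1 r2 \<phi> :: "real \<Rightarrow> real"
  assumes r1m[measurable]: "r1 \<in> borel_measurable borel" and r2m[measurable]: "r2 \<in> borel_measurable borel"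
    and r1p: "\<And>t. 0 \<le> r1 t" and r2p: "\<And>t. 0 \<le> r2 t"
    and r1i: "integrable lborel r1" and r2i: "integrable lborel r2"
    and m1: "(\<integral>t. r1 t \<partial>lborel) = m" and m2: "(\<integral>t. r2 t \<partial>lborel) = m" and mpos: "m > 0"
    and v1: "integrable lborel (\<lambda>t. r1 t * t\<^sup>2)" and v2: "integrable lborel (\<lambda>t. r2 t * t\<^sup>2)"
    and bmp: "bm B \<phi>" and \<beta>: "0 \<le> \<beta>" and L: "0 \<le> L"
    and osc: "\<And>u v. \<bar>\<phi> u - \<phi> v\<bar> \<le> L * (2 + \<beta> * u\<^sup>2 + \<beta> * v\<^sup>2)"
  shows "\<bar>(\<integral>t. r1 t * \<phi> t \<partial>lborel) - (\<integral>t. r2 t * \<phi> t \<partial>lborel)\<bar>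
           \<le> L * (2 * m + \<beta> * (\<integral>t. r1 t * t\<^sup>2 \<partial>lborel) + \<beta> * (\<integral>t. r2 t * t\<^sup>2 \<partial>lborel))"
proof -
  have pm[measurable]: "\<phi> \<in> borel_measurable borel" using bmp by (simp add: bm_def)
  define I1 where "I1 = (\<integral>t. r1 t * \<phi> t \<partial>lborel)"
  define I2 where "I2 = (\<integral>t. r2 t * \<phi> t \<partial>lborel)"
  define J1 where "J1 = (\<integral>t. r1 t * t\<^sup>2 \<partial>lborel)"
  define J2 where "J2 = (\<integral>t. r2 t * t\<^sup>2 \<partial>lborel)"
  have i1: "integrable lborel (\<lambda>t. r1 t * \<phi> t)" by (rule integrable_mult_bm[OF r1i bmp])
  have i2: "integrable lborel (\<lambda>t. r2 t * \<phi> t)" by (rule integrable_mult_bm[OF r2i bmp])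
  have h1: "\<bar>m * \<phi> u - I2\<bar> \<le> L * (2 + \<beta> * u\<^sup>2) * m + (L * \<beta>) * J2" for u
  proof -
    have bm2: "bm (2*B) (\<lambda>v. \<phi> u - \<phi> v)"
    proof -
      from bmp have b: "\<And>t. \<bar>\<phi> t\<bar> \<le> B" by (simp add: bm_def)
      have "\<bar>\<phi> u - \<phi> v\<bar> \<le> 2*B" for v using b[of u] b[of v] by arith
      then show ?thesis using bmp by (auto simp: bm_def)
    qed
    have eq: "(\<integral>v. r2 v * (\<phi> u - \<phi> v) \<partial>lborel) = m * \<phi> u - I2"
    proof -
      have "(\<integral>v. r2 v * (\<phi> u - \<phi> v) \<partial>lborel) = (\<integral>v. \<phi> u * r2 v - r2 v * \<phi> v \<partial>lborel)"
        by (simp add: algebra_simps)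
      also have "\<dots> = (\<integral>v. \<phi> u * r2 v \<partial>lborel) - I2"
        unfolding I2_def by (rule Bochner_Integration.integral_diff) (use r2i i2 in auto)
      also have "\<dots> = m * \<phi> u - I2" using m2 by simp
      finally show ?thesis .
    qed
    have "\<bar>\<integral>v. r2 v * (\<phi> u - \<phi> v) \<partial>lborel\<bar>
          \<le> (\<integral>v. L * (2 + \<beta> * u\<^sup>2) * r2 v + (L * \<beta>) * (r2 v * v\<^sup>2) \<partial>lborel)"
    proof (rule integral_abs_bound_integral)
      show "integrable lborel (\<lambda>v. r2 v * (\<phi> u - \<phi> v))" by (rule integrable_mult_bm[OF r2i bm2])
      show "integrable lborel (\<lambda>v. L * (2 + \<beta> * u\<^sup>2) * r2 v + L * \<beta> * (r2 v * v\<^sup>2))"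
        using r2i v2 by auto
      fix v
      have "\<bar>r2 v * (\<phi> u - \<phi> v)\<bar> = r2 v * \<bar>\<phi> u - \<phi> v\<bar>" using r2p[of v] by (simp add: abs_mult)
      also have "\<dots> \<le> r2 v * (L * (2 + \<beta> * u\<^sup>2 + \<beta> * v\<^sup>2))"
        by (rule mult_left_mono[OF osc r2p])
      also have "\<dots> = L * (2 + \<beta> * u\<^sup>2) * r2 v + L * \<beta> * (r2 v * v\<^sup>2)" by (simp add: algebra_simps)
      finally show "\<bar>r2 v * (\<phi> u - \<phi> v)\<bar> \<le> L * (2 + \<beta> * u\<^sup>2) * r2 v + L * \<beta> * (r2 v * v\<^sup>2)" .
    qed
    also have "\<dots> = L * (2 + \<beta> * u\<^sup>2) * m + (L * \<beta>) * J2"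
      using r2i v2 m2 unfolding J2_def by simp
    finally show ?thesis using eq by simp
  qed
  have bm3: "bm (\<bar>m\<bar> * B + \<bar>I2\<bar>) (\<lambda>u. m * \<phi> u - I2)"
  proof -
    from bmp have b: "\<And>t. \<bar>\<phi> t\<bar> \<le> B" by (simp add: bm_def)
    have "\<bar>m * \<phi> u - I2\<bar> \<le> \<bar>m\<bar> * B + \<bar>I2\<bar>" for u
    proof -
      have "\<bar>m * \<phi> u\<bar> \<le> \<bar>m\<bar> * B" using b[of u] by (simp add: abs_mult mult_left_mono)
      then show ?thesis by arith
    qed
    then show ?thesis using bmp by (auto simp: bm_def)
  qed
  have eq2: "(\<integral>u. r1 u * (m * \<phi> u - I2) \<partial>lborel) = m * I1 - I2 * m"
  proof -
    have "(\<integral>u. r1 u * (m * \<phi> u - I2) \<partial>lborel) = (\<integral>u. m * (r1 u * \<phi> u) - I2 * r1 u \<partial>lborel)"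
      by (simp add: algebra_simps)
    also have "\<dots> = (\<integral>u. m * (r1 u * \<phi> u) \<partial>lborel) - (\<integral>u. I2 * r1 u \<partial>lborel)"
      by (rule Bochner_Integration.integral_diff) (use r1i i1 in auto)
    also have "\<dots> = m * I1 - I2 * m" using m1 unfolding I1_def by simp
    finally show ?thesis .
  qed
  have "\<bar>\<integral>u. r1 u * (m * \<phi> u - I2) \<partial>lborel\<bar>
        \<le> (\<integral>u. (L * 2 * m + L * \<beta> * J2) * r1 u + (L * \<beta> * m) * (r1 u * u\<^sup>2) \<partial>lborel)"
  proof (rule integral_abs_bound_integral)
    show "integrable lborel (\<lambda>u. r1 u * (m * \<phi> u - I2))" by (rule integrable_mult_bm[OF r1i bm3])
    show "integrable lborel (\<lambda>u. (L * 2 * m + L * \<beta> * J2) * r1 u + (L * \<beta> * m) * (r1 u * u\<^sup>2))"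
      using r1i v1 by auto
    fix u
    have "\<bar>r1 u * (m * \<phi> u - I2)\<bar> = r1 u * \<bar>m * \<phi> u - I2\<bar>" using r1p[of u] by (simp add: abs_mult)
    also have "\<dots> \<le> r1 u * (L * (2 + \<beta> * u\<^sup>2) * m + (L * \<beta>) * J2)"
      by (rule mult_left_mono[OF h1 r1p])
    also have "\<dots> = (L * 2 * m + L * \<beta> * J2) * r1 u + (L * \<beta> * m) * (r1 u * u\<^sup>2)"
      by (simp add: algebra_simps)
    finally show "\<bar>r1 u * (m * \<phi> u - I2)\<bar> \<le> (L * 2 * m + L * \<beta> * J2) * r1 u + (L * \<beta> * m) * (r1 u * u\<^sup>2)" .
  qed
  also have "\<dots> = (L * 2 * m + L * \<beta> * J2) * m + (L * \<beta> * m) * J1"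
    using r1i v1 m1 unfolding J1_def by simp
  finally have "\<bar>m * I1 - I2 * m\<bar> \<le> m * (L * (2 * m + \<beta> * J1 + \<beta> * J2))"
    using eq2 by (simp add: algebra_simps)
  then have "m * \<bar>I1 - I2\<bar> \<le> m * (L * (2 * m + \<beta> * J1 + \<beta> * J2))"
    using mpos by (simp add: abs_mult algebra_simps flip: abs_mult[of m, simplified abs_of_pos[OF mpos]])
  then have "\<bar>I1 - I2\<bar> \<le> L * (2 * m + \<beta> * J1 + \<beta> * J2)"
    using mpos by simp
  then show ?thesis unfolding I1_def I2_def J1_def J2_def .
qed

locale gekernel = dkernel +
  fixes \<gamma> b R \<alpha> :: real and nd :: "real \<Rightarrow> real"
  assumes drift_int: "\<And>\<theta>. integrable lborel (\<lambda>t. k \<theta> t * t\<^sup>2)"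
    and drift: "\<And>\<theta>. (\<integral>t. k \<theta> t * t\<^sup>2 \<partial>lborel) \<le> \<gamma> * \<theta>\<^sup>2 + b"
    and gam: "0 \<le> \<gamma>" "\<gamma> < 1" and b: "0 \<le> b" and R: "0 < R" "2 * b < (1 - \<gamma>) * R"
    and nd_meas[measurable]: "nd \<in> borel_measurable borel" and nd_nonneg: "\<And>t. 0 \<le> nd t"
    and nd_int: "integrable lborel nd" and nd_one: "(\<integral>t. nd t \<partial>lborel) = 1"
    and alp: "0 < \<alpha>" "\<alpha> < 1"
    and minor: "\<And>\<theta> t. \<theta>\<^sup>2 \<le> R \<Longrightarrow> \<alpha> * nd t \<le> k \<theta> t"
begin

definition "bet = \<alpha> / (\<gamma> * R + 2 * b + 1)"
definition "gam0 = \<gamma> + 2 * b / R"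
definition "ab1 = (2 + bet * gam0 * R) / (2 + bet * R)"
definition "ab = max ab1 (1 - \<alpha> / 2)"
definition "osc L \<phi> \<longleftrightarrow> (\<forall>u v. \<bar>\<phi> u - \<phi> v\<bar> \<le> L * (2 + bet * u\<^sup>2 + bet * v\<^sup>2))"
definition "B0 = b / (1 - \<gamma>)"

lemma bet_pos: "0 < bet"
  unfolding bet_def using alp gam b R by (intro divide_pos_pos) (auto intro!: add_nonneg_pos)

lemma bet_le: "bet * (\<gamma> * R + 2 * b) \<le> \<alpha>"
proof -
  have d: "0 < \<gamma> * R + 2 * b + 1" using gam b R by (auto intro!: add_nonneg_pos)
  have "bet * (\<gamma> * R + 2 * b) \<le> bet * (\<gamma> * R + 2 * b + 1)" using bet_pos by simp
  also have "\<dots> = \<alpha>" unfolding bet_def using d by simp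
  finally show ?thesis .
qed

lemma gam0: "0 \<le> gam0" "gam0 < 1"
proof -
  show "0 \<le> gam0" unfolding gam0_def using gam b R by simp
  have "2 * b / R < 1 - \<gamma>" using R by (simp add: divide_less_eq mult.commute)
  then show "gam0 < 1" unfolding gam0_def by simp
qed

lemma ab1: "0 < ab1" "ab1 < 1"
proof -
  have p: "0 < 2 + bet * R" using bet_pos R by (simp add: add_pos_pos)
  have "0 \<le> bet * gam0 * R" using bet_pos gam0 R by simp
  then show "0 < ab1" unfolding ab1_def using p by simp
  have "bet * gam0 * R < bet * R" using bet_pos gam0 R by simp
  then show "ab1 < 1" unfolding ab1_def using p by simp
qed

lemma ab: "0 < ab" "ab < 1"
  unfolding ab_def using ab1 alp by auto

lemma B0: "0 \<le> B0" unfolding B0_def using b gam by simp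

lemma drift_bound_large:
  assumes s: "R \<le> s" and L: "0 \<le> L"
  shows "L * (2 + bet * (\<gamma> * s + 2 * b)) \<le> ab * L * (2 + bet * s)"
proof -
  have s0: "0 \<le> s" using s R by simp
  have "2 * b \<le> (2 * b / R) * s"
  proof -
    have "2 * b = (2 * b / R) * R" using R by simp
    also have "\<dots> \<le> (2 * b / R) * s" using s b R by (intro mult_left_mono) auto
    finally show ?thesis .
  qed
  then have "\<gamma> * s + 2 * b \<le> gam0 * s" unfolding gam0_def by (simp add: algebra_simps)
  then have 1: "2 + bet * (\<gamma> * s + 2 * b) \<le> 2 + bet * gam0 * s"
    using bet_pos by (simp add: mult_left_mono mult.assoc)
  have p: "0 < 2 + bet * R" using bet_pos R by (simp add: add_pos_pos)
  have eq: "(2 + bet * gam0 * R) * (2 + bet * s) - (2 + bet * gam0 * s) * (2 + bet * R)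
     = 2 * bet * (1 - gam0) * (s - R)" by (simp add: algebra_simps)
  have "0 \<le> 2 * bet * (1 - gam0) * (s - R)" using bet_pos gam0 s by simp
  then have "0 \<le> (2 + bet * gam0 * R) * (2 + bet * s) - (2 + bet * gam0 * s) * (2 + bet * R)"
    by (subst eq)
  then have "(2 + bet * gam0 * s) * (2 + bet * R) \<le> (2 + bet * gam0 * R) * (2 + bet * s)"
    by simp
  then have 2: "2 + bet * gam0 * s \<le> ab1 * (2 + bet * s)"
    unfolding ab1_def using p by (simp add: field_simps)
  have 3: "ab1 * (2 + bet * s) \<le> ab * (2 + bet * s)"
    unfolding ab_def using bet_pos s0 by (intro mult_right_mono) auto
  from 1 2 3 have "2 + bet * (\<gamma> * s + 2 * b) \<le> ab * (2 + bet * s)" by linarith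
  then show ?thesis using L by (simp add: mult_left_mono mult.assoc mult.left_commute)
qed

lemma contract:
  assumes bmp: "bm B \<phi>" and osc: "osc L \<phi>" and L: "0 \<le> L"
  shows "osc (ab * L) (Pop k \<phi>)"
  unfolding osc_def
proof (intro allI)
  fix x y :: real
  define s where "s = x\<^sup>2 + y\<^sup>2"
  have s0: "0 \<le> s" unfolding s_def by simp
  have oscp: "\<And>u v. \<bar>\<phi> u - \<phi> v\<bar> \<le> L * (2 + bet * u\<^sup>2 + bet * v\<^sup>2)"
    using osc unfolding osc_def by blast
  show "\<bar>Pop k \<phi> x - Pop k \<phi> y\<bar> \<le> ab * L * (2 + bet * x\<^sup>2 + bet * y\<^sup>2)"
  proof (cases "R \<le> s")
    case True
    have "\<bar>Pop k \<phi> x - Pop k \<phi> y\<bar> \<le> L * (2 * 1 + bet * (\<integral>t. k x t * t\<^sup>2 \<partial>lborel) + bet * (\<integral>t. k y t * t\<^sup>2 \<partial>lborel))"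
      unfolding Pop_def
      by (rule coupling[OF _ _ k_nonneg k_nonneg k_int k_int k_one k_one _ drift_int drift_int bmp
            _ L oscp]) (use bet_pos in auto)
    also have "\<dots> \<le> L * (2 + bet * (\<gamma> * s + 2 * b))"
    proof -
      have "bet * (\<integral>t. k x t * t\<^sup>2 \<partial>lborel) + bet * (\<integral>t. k y t * t\<^sup>2 \<partial>lborel)
            \<le> bet * (\<gamma> * x\<^sup>2 + b) + bet * (\<gamma> * y\<^sup>2 + b)"
        using bet_pos drift[of x] drift[of y] by (intro add_mono mult_left_mono) auto
      also have "\<dots> = bet * (\<gamma> * s + 2 * b)" unfolding s_def by (simp add: algebra_simps)
      finally show ?thesis using L by (intro mult_left_mono) auto
    qed
    also have "\<dots> \<le> ab * L * (2 + bet * s)" by (rule drift_bound_large[OF True L])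
    finally show ?thesis unfolding s_def by (simp add: algebra_simps)
  next
    case False
    have x2: "x\<^sup>2 \<le> R" and y2: "y\<^sup>2 \<le> R" using False unfolding s_def
      by (auto intro: order_trans[of _ "x\<^sup>2 + y\<^sup>2"] simp: not_le)
    define r1 where "r1 t = k x t - \<alpha> * nd t" for t
    define r2 where "r2 t = k y t - \<alpha> * nd t" for t
    have r1p: "0 \<le> r1 t" for t unfolding r1_def using minor[OF x2] by simp
    have r2p: "0 \<le> r2 t" for t unfolding r2_def using minor[OF y2] by simp
    have r1i: "integrable lborel r1" unfolding r1_def[abs_def] using k_int nd_int by auto
    have r2i: "integrable lborel r2" unfolding r2_def[abs_def] using k_int nd_int by auto
    have r1m: "(\<integral>t. r1 t \<partial>lborel) = 1 - \<alpha>"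
      unfolding r1_def using k_int nd_int by (simp add: k_one nd_one)
    have r2m: "(\<integral>t. r2 t \<partial>lborel) = 1 - \<alpha>"
      unfolding r2_def using k_int nd_int by (simp add: k_one nd_one)
    have vi: "integrable lborel (\<lambda>t. r t * t\<^sup>2)" and vle: "(\<integral>t. r t * t\<^sup>2 \<partial>lborel) \<le> (\<integral>t. k z t * t\<^sup>2 \<partial>lborel)"
      if "\<And>t. r t = k z t - \<alpha> * nd t" "\<And>t. 0 \<le> r t" for r z
    proof -
      have [measurable]: "r \<in> borel_measurable borel"
      proof -
        have "r = (\<lambda>t. k z t - \<alpha> * nd t)" using that(1) by (simp add: fun_eq_iff)
        also have "\<dots> \<in> borel_measurable borel" by measurable
        finally show ?thesis .
      qed
      have le: "r t * t\<^sup>2 \<le> k z t * t\<^sup>2" for t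
        using that(1)[of t] nd_nonneg[of t] alp by (intro mult_right_mono) auto
      show vi: "integrable lborel (\<lambda>t. r t * t\<^sup>2)"
        by (rule Bochner_Integration.integrable_bound[OF drift_int[of z]])
          (use le that(2) in \<open>auto intro!: AE_I2 intro: order_trans[OF _ abs_ge_self]\<close>)
      show "(\<integral>t. r t * t\<^sup>2 \<partial>lborel) \<le> (\<integral>t. k z t * t\<^sup>2 \<partial>lborel)"
        by (rule integral_mono[OF vi drift_int le])
    qed
    have eqx: "Pop k \<phi> x = (\<integral>t. r1 t * \<phi> t \<partial>lborel) + \<alpha> * (\<integral>t. nd t * \<phi> t \<partial>lborel)"
    proof -
      have "(\<integral>t. r1 t * \<phi> t \<partial>lborel) = (\<integral>t. k x t * \<phi> t - \<alpha> * (nd t * \<phi> t) \<partial>lborel)"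
        unfolding r1_def by (simp add: algebra_simps)
      also have "\<dots> = Pop k \<phi> x - \<alpha> * (\<integral>t. nd t * \<phi> t \<partial>lborel)"
        unfolding Pop_def using Pop_int[OF bmp] integrable_mult_bm[OF nd_int bmp] by simp
      finally show ?thesis by simp
    qed
    have eqy: "Pop k \<phi> y = (\<integral>t. r2 t * \<phi> t \<partial>lborel) + \<alpha> * (\<integral>t. nd t * \<phi> t \<partial>lborel)"
    proof -
      have "(\<integral>t. r2 t * \<phi> t \<partial>lborel) = (\<integral>t. k y t * \<phi> t - \<alpha> * (nd t * \<phi> t) \<partial>lborel)"
        unfolding r2_def by (simp add: algebra_simps)
      also have "\<dots> = Pop k \<phi> y - \<alpha> * (\<integral>t. nd t * \<phi> t \<partial>lborel)"
        unfolding Pop_def using Pop_int[OF bmp] integrable_mult_bm[OF nd_int bmp] by simp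
      finally show ?thesis by simp
    qed
    have "\<bar>Pop k \<phi> x - Pop k \<phi> y\<bar> = \<bar>(\<integral>t. r1 t * \<phi> t \<partial>lborel) - (\<integral>t. r2 t * \<phi> t \<partial>lborel)\<bar>"
      using eqx eqy by simp
    also have "\<dots> \<le> L * (2 * (1 - \<alpha>) + bet * (\<integral>t. r1 t * t\<^sup>2 \<partial>lborel) + bet * (\<integral>t. r2 t * t\<^sup>2 \<partial>lborel))"
      apply (rule coupling[OF _ _ r1p r2p r1i r2i r1m r2m _ vi vi bmp _ L oscp])
      unfolding r1_def r2_def using alp bet_pos minor[OF x2] minor[OF y2] by (auto simp: r1_def r2_def)
    also have "\<dots> \<le> L * (2 * (1 - \<alpha>) + bet * (\<gamma> * s + 2 * b))"
    proof -
      have "bet * (\<integral>t. r1 t * t\<^sup>2 \<partial>lborel) + bet * (\<integral>t. r2 t * t\<^sup>2 \<partial>lborel)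
            \<le> bet * (\<gamma> * x\<^sup>2 + b) + bet * (\<gamma> * y\<^sup>2 + b)"
        using bet_pos drift[of x] drift[of y] vle[of r1 x] vle[of r2 y] r1p r2p
        by (intro add_mono mult_left_mono) (auto simp: r1_def r2_def)
      also have "\<dots> = bet * (\<gamma> * s + 2 * b)" unfolding s_def by (simp add: algebra_simps)
      finally show ?thesis using L by (intro mult_left_mono) auto
    qed
    also have "\<dots> \<le> L * (2 * (1 - \<alpha>) + \<alpha>)"
    proof -
      have "bet * (\<gamma> * s) \<le> bet * (\<gamma> * R)" using False bet_pos gam by (auto intro!: mult_left_mono)
      then have "bet * (\<gamma> * s + 2 * b) \<le> \<alpha>" using bet_le by (simp add: algebra_simps)
      then show ?thesis using L by (intro mult_left_mono) auto
    qed
    also have "\<dots> = (1 - \<alpha>/2) * L * 2" by (simp add: algebra_simps)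
    also have "\<dots> \<le> ab * L * (2 + bet * s)"
      using L alp bet_pos s0 unfolding ab_def
      by (intro mult_mono) auto
    finally show ?thesis unfolding s_def by (simp add: algebra_simps)
  qed
qed

lemma contract_iter:
  assumes "bm B \<phi>" "osc L \<phi>" "0 \<le> L"
  shows "osc (ab ^ n * L) ((Pop k ^^ n) \<phi>)"
proof (induction n)
  case 0 then show ?case using assms by simp
next
  case (Suc n)
  have "osc (ab * (ab ^ n * L)) (Pop k ((Pop k ^^ n) \<phi>))"
    by (rule contract[OF bm_Pn[OF assms(1)] Suc]) (use ab assms(3) in simp)
  then show ?case by (simp add: mult.assoc)
qed

lemma osc_indicator: "osc (1/2) (indicator A)"
  unfolding osc_def
proof (intro allI)
  fix u v :: real
  have "\<bar>indicator A u - indicator A v :: real\<bar> \<le> 1" by (auto simp: indicator_def)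
  also have "1 \<le> 1/2 * (2 + bet * u\<^sup>2 + bet * v\<^sup>2)" using bet_pos by simp
  finally show "\<bar>indicator A u - indicator A v :: real\<bar> \<le> 1/2 * (2 + bet * u\<^sup>2 + bet * v\<^sup>2)" .
qed

end

lemma floor_card:
  fixes t :: real and K :: nat
  assumes "0 \<le> t" "t \<le> real K"
  shows "card ({1..K} \<inter> {j. real j \<le> t}) = nat \<lfloor>t\<rfloor>"
proof -
  have "{1..K} \<inter> {j. real j \<le> t} = {1..nat \<lfloor>t\<rfloor>}"
  proof (intro set_eqI iffI)
    fix j assume "j \<in> {1..K} \<inter> {j. real j \<le> t}"
    then have "1 \<le> j" "real j \<le> t" by auto
    then have "int j \<le> \<lfloor>t\<rfloor>" by (simp add: le_floor_iff)
    then show "j \<in> {1..nat \<lfloor>t\<rfloor>}" using \<open>1 \<le> j\<close> by auto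
  next
    fix j assume j: "j \<in> {1..nat \<lfloor>t\<rfloor>}"
    then have "int j \<le> \<lfloor>t\<rfloor>" by auto
    then have "real j \<le> t" by (simp add: le_floor_iff)
    moreover have "real j \<le> real K" using \<open>real j \<le> t\<close> assms by linarith
    ultimately show "j \<in> {1..K} \<inter> {j. real j \<le> t}" using j by auto
  qed
  then show ?thesis by simp
qed

lemma SF:
  fixes g :: "real \<Rightarrow> real"
  assumes M: "prob_space M" "sets M = sets borel" and N: "prob_space N" "sets N = sets borel"
    and d: "\<And>B. B \<in> sets borel \<Longrightarrow> \<bar>measure M B - measure N B\<bar> \<le> \<delta>"
    and g[measurable]: "g \<in> borel_measurable borel" and g0: "\<And>x. 0 \<le> g x" and g1: "\<And>x. g x \<le> 1"
  shows "\<bar>(\<integral>x. g x \<partial>M) - (\<integral>x. g x \<partial>N)\<bar> \<le> \<delta>"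
proof -
  interpret M: prob_space M by fact
  interpret N: prob_space N by fact
  have spM: "space M = UNIV" using sets_eq_imp_space_eq[OF M(2)] by simp
  have spN: "space N = UNIV" using sets_eq_imp_space_eq[OF N(2)] by simp
  have gM[measurable]: "g \<in> borel_measurable M" by (subst measurable_cong_sets[OF M(2) refl]) (rule g)
  have gN[measurable]: "g \<in> borel_measurable N" by (subst measurable_cong_sets[OF N(2) refl]) (rule g)
  have key: "\<bar>(\<integral>x. g x \<partial>M) - (\<integral>x. g x \<partial>N)\<bar> \<le> \<delta> + 2 / real K" if K: "1 \<le> K" for K :: nat
  proof -
    define B where "B j = {x. real j \<le> real K * g x}" for j
    have Bs[measurable]: "B j \<in> sets borel" for j unfolding B_def by measurable
    have BM: "B j \<in> sets M" for j using Bs M(2) by simp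
    have BN: "B j \<in> sets N" for j using Bs N(2) by simp
    define h where "h x = (\<Sum>j\<in>{1..K}. indicator (B j) x) / real K" for x :: real
    have hb: "g x - 1 / real K \<le> h x \<and> h x \<le> g x" for x
    proof -
      have "(\<Sum>j\<in>{1..K}. indicator (B j) x :: real) = (\<Sum>j\<in>{1..K}. indicator {j. real j \<le> real K * g x} j)"
        by (intro sum.cong) (auto simp: B_def indicator_def)
      also have "\<dots> = real (card ({1..K} \<inter> {j. real j \<le> real K * g x}))"
        by (simp add: indicator_def sum.If_cases)
      also have "\<dots> = real (nat \<lfloor>real K * g x\<rfloor>)"
        using g0[of x] g1[of x] by (subst floor_card) (auto intro: mult_left_le)
      finally have e: "(\<Sum>j\<in>{1..K}. indicator (B j) x :: real) = real (nat \<lfloor>real K * g x\<rfloor>)" .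
      have f0: "0 \<le> \<lfloor>real K * g x\<rfloor>" using g0[of x] by simp
      have "real_of_int \<lfloor>real K * g x\<rfloor> \<le> real K * g x" by (rule of_int_floor_le)
      moreover have "real K * g x - 1 < real_of_int \<lfloor>real K * g x\<rfloor>" using real_of_int_floor_gt_diff_one .
      ultimately have "real K * g x - 1 \<le> real (nat \<lfloor>real K * g x\<rfloor>) \<and> real (nat \<lfloor>real K * g x\<rfloor>) \<le> real K * g x"
        using f0 by simp
      then obtain n where n: "real K * g x - 1 \<le> n" "n \<le> real K * g x"
        and ne: "real (nat \<lfloor>real K * g x\<rfloor>) = n" by blast
      have Kp: "0 < real K" using K by simp
      have "n / real K \<le> g x" using n(2) Kp by (simp add: divide_le_eq mult.commute)
      moreover have "g x - 1 / real K \<le> n / real K"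
      proof -
        have "g x - 1 / real K = (real K * g x - 1) / real K" using Kp by (simp add: field_simps)
        also have "\<dots> \<le> n / real K" using n(1) Kp by (simp add: divide_right_mono)
        finally show ?thesis .
      qed
      ultimately show ?thesis unfolding h_def e ne by simp
    qed
    have hm[measurable]: "h \<in> borel_measurable borel" unfolding h_def by measurable
    have hbd: "\<bar>h x\<bar> \<le> 1" for x using hb[of x] g1[of x] g0[of x] K
      by (smt (verit, best) divide_le_eq_1_pos of_nat_0_less_iff of_nat_1 of_nat_le_iff)
    have intM: "integrable M f" if "f \<in> borel_measurable borel" "\<And>x. \<bar>f x\<bar> \<le> c" for f :: "real \<Rightarrow> real" and c :: real
      using that measurable_cong_sets[OF M(2) refl] by (intro M.integrable_const_bound[where B=c]) auto
    have intN: "integrable N f" if "f \<in> borel_measurable borel" "\<And>x. \<bar>f x\<bar> \<le> c" for f :: "real \<Rightarrow> real" and c :: real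
      using that measurable_cong_sets[OF N(2) refl] by (intro N.integrable_const_bound[where B=c]) auto
    have gi: "\<bar>g x\<bar> \<le> 1" for x using g0[of x] g1[of x] by simp
    have hint: "(\<integral>x. h x \<partial>L) = (\<Sum>j\<in>{1..K}. measure L (B j)) / real K"
      if "prob_space L" "sets L = sets borel" for L
    proof -
      interpret L: prob_space L by fact
      have BL: "B j \<in> sets L" for j using that(2) Bs by simp
      have "(\<integral>x. h x \<partial>L) = (\<integral>x. (\<Sum>j\<in>{1..K}. indicator (B j) x) \<partial>L) / real K"
        unfolding h_def by simp
      also have "(\<integral>x. (\<Sum>j\<in>{1..K}. indicator (B j) x :: real) \<partial>L) = (\<Sum>j\<in>{1..K}. (\<integral>x. indicator (B j) x \<partial>L))"
        proof (rule Bochner_Integration.integral_sum)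
        fix j assume "j \<in> {1..K}" show "integrable L (\<lambda>x. indicator (B j) x :: real)"
          by (rule integrable_real_indicator[OF BL]) (simp add: L.emeasure_eq_measure)
      qed
      also have "\<dots> = (\<Sum>j\<in>{1..K}. measure L (B j))"
        using BL sets.sets_into_space by (intro sum.cong) (auto simp: Int_absorb2)
      finally show ?thesis .
    qed
    have "\<bar>(\<integral>x. h x \<partial>M) - (\<integral>x. h x \<partial>N)\<bar> = \<bar>\<Sum>j\<in>{1..K}. measure M (B j) - measure N (B j)\<bar> / real K"
      using hint[OF M] hint[OF N] by (simp add: sum_subtractf flip: diff_divide_distrib)
    also have "\<dots> \<le> (\<Sum>j\<in>{1..K}. \<delta>) / real K"
      by (intro divide_right_mono sum_abs[THEN order_trans] sum_mono d Bs) auto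
    also have "\<dots> = \<delta>" using K by simp
    finally have 1: "\<bar>(\<integral>x. h x \<partial>M) - (\<integral>x. h x \<partial>N)\<bar> \<le> \<delta>" .
    have close: "\<bar>(\<integral>x. g x \<partial>L) - (\<integral>x. h x \<partial>L)\<bar> \<le> 1 / real K"
      if L: "prob_space L" "sets L = sets borel" for L
    proof -
      interpret L: prob_space L by fact
      have intL: "integrable L f" if "f \<in> borel_measurable borel" "\<And>x. \<bar>f x\<bar> \<le> c" for f :: "real \<Rightarrow> real" and c :: real
        using that measurable_cong_sets[OF L(2) refl] by (intro L.integrable_const_bound[where B=c]) auto
      have gL: "integrable L g" by (rule intL[OF g gi])
      have hL: "integrable L h" by (rule intL[OF hm hbd])
      have "(\<integral>x. g x \<partial>L) - (\<integral>x. h x \<partial>L) = (\<integral>x. g x - h x \<partial>L)"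
        using gL hL by simp
      also have "\<bar>\<dots>\<bar> \<le> (\<integral>x. 1 / real K \<partial>L)"
      proof (intro integral_abs_bound_integral)
        fix x show "\<bar>g x - h x\<bar> \<le> 1 / real K" using hb[of x] by linarith
      qed (use gL hL in auto)
      also have "\<dots> = 1 / real K" by (simp add: L.prob_space)
      finally show ?thesis .
    qed
    from close[OF M] close[OF N] 1 show ?thesis by linarith
  qed
  show ?thesis
  proof (rule ccontr)
    assume "\<not> ?thesis"
    then have pos: "0 < \<bar>(\<integral>x. g x \<partial>M) - (\<integral>x. g x \<partial>N)\<bar> - \<delta>" by simp
    obtain K :: nat where K: "2 / (\<bar>(\<integral>x. g x \<partial>M) - (\<integral>x. g x \<partial>N)\<bar> - \<delta>) < real K"
      using reals_Archimedean2 by blast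
    have K0: "0 < real K" using K pos by (smt (verit) divide_pos_pos)
    then have "2 / real K < \<bar>(\<integral>x. g x \<partial>M) - (\<integral>x. g x \<partial>N)\<bar> - \<delta>"
      using K pos by (simp add: divide_less_eq mult.commute)
    moreover have "1 \<le> K" using K0 by simp
    ultimately show False using key by fastforce
  qed
qed

lemma approx_lim:
  fixes a c :: "nat \<Rightarrow> real"
  assumes "\<And>n. \<bar>a n - L\<bar> \<le> c n" "c \<longlonglongrightarrow> 0"
  shows "a \<longlonglongrightarrow> L"
proof -
  have "(\<lambda>n. a n - L) \<longlonglongrightarrow> 0"
    by (rule Lim_null_comparison[OF _ assms(2)]) (use assms(1) in auto)
  then have "(\<lambda>n. (a n - L) + L) \<longlonglongrightarrow> 0 + L" by (intro tendsto_add) auto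
  then show ?thesis by simp
qed

context gekernel
begin

lemma emeasure_Kd: "emeasure (Kd k \<theta>) A = ennreal (measure (Kd k \<theta>) A)"
proof -
  interpret prob_space "Kd k \<theta>" by (rule prob_Kd)
  show ?thesis by (rule emeasure_eq_measure)
qed

lemma space_iter[simp]: "space (kernel_iter (Kd k) n x) = UNIV"
  using sets_eq_imp_space_eq[OF iter_prob'(2)] by simp

lemma iter_meas_cong: "f \<in> borel \<rightarrow>\<^sub>M N \<Longrightarrow> f \<in> kernel_iter (Kd k) n x \<rightarrow>\<^sub>M N"
  by (subst measurable_cong_sets[OF iter_prob'(2) refl])

lemma nn_V_Kd: "(\<integral>\<^sup>+t. ennreal (t\<^sup>2) \<partial>Kd k \<theta>) = ennreal (\<integral>t. k \<theta> t * t\<^sup>2 \<partial>lborel)"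
proof -
  have "(\<integral>\<^sup>+t. ennreal (t\<^sup>2) \<partial>Kd k \<theta>) = (\<integral>\<^sup>+t. ennreal (k \<theta> t) * ennreal (t\<^sup>2) \<partial>lborel)"
    unfolding Kd_def by (rule nn_integral_density) auto
  also have "\<dots> = (\<integral>\<^sup>+t. ennreal (k \<theta> t * t\<^sup>2) \<partial>lborel)"
    by (simp add: ennreal_mult k_nonneg)
  also have "\<dots> = ennreal (\<integral>t. k \<theta> t * t\<^sup>2 \<partial>lborel)"
    by (rule nn_integral_eq_integral) (auto simp: drift_int k_nonneg)
  finally show ?thesis .
qed

lemma iter_V: "(\<integral>\<^sup>+t. ennreal (t\<^sup>2) \<partial>kernel_iter (Kd k) n x) \<le> ennreal (x\<^sup>2 + B0)"
proof (induction n)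
  case 0
  have "(\<integral>\<^sup>+t. ennreal (t\<^sup>2) \<partial>kernel_iter (Kd k) 0 x) = ennreal (x\<^sup>2)"
    by (simp add: nn_integral_return)
  then show ?case using B0 by (simp add: ennreal_leI)
next
  case (Suc n)
  let ?M = "kernel_iter (Kd k) n x"
  interpret M: prob_space ?M by (rule iter_prob')
  have "(\<integral>\<^sup>+t. ennreal (t\<^sup>2) \<partial>kernel_iter (Kd k) (Suc n) x) = (\<integral>\<^sup>+\<theta>. (\<integral>\<^sup>+t. ennreal (t\<^sup>2) \<partial>Kd k \<theta>) \<partial>?M)"
    using nn_integral_bind[OF _ iter_meas_cong[OF Kd_meas_sub], of "\<lambda>t. ennreal (t\<^sup>2)" n x] by simp
  also have "\<dots> = (\<integral>\<^sup>+\<theta>. ennreal (\<integral>t. k \<theta> t * t\<^sup>2 \<partial>lborel) \<partial>?M)"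
    by (simp add: nn_V_Kd)
  also have "\<dots> \<le> (\<integral>\<^sup>+\<theta>. ennreal \<gamma> * ennreal (\<theta>\<^sup>2) + ennreal b \<partial>?M)"
    using drift gam b by (intro nn_integral_mono) (simp add: ennreal_mult[symmetric] ennreal_plus[symmetric] ennreal_leI del: ennreal_plus)
  also have "\<dots> = ennreal \<gamma> * (\<integral>\<^sup>+\<theta>. ennreal (\<theta>\<^sup>2) \<partial>?M) + ennreal b"
  proof -
    have "(\<integral>\<^sup>+\<theta>. ennreal \<gamma> * ennreal (\<theta>\<^sup>2) + ennreal b \<partial>?M) = (\<integral>\<^sup>+\<theta>. ennreal \<gamma> * ennreal (\<theta>\<^sup>2) \<partial>?M) + (\<integral>\<^sup>+\<theta>. ennreal b \<partial>?M)"
      by (rule nn_integral_add) (rule iter_meas_cong, measurable)+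
    moreover have "(\<integral>\<^sup>+\<theta>. ennreal \<gamma> * ennreal (\<theta>\<^sup>2) \<partial>?M) = ennreal \<gamma> * (\<integral>\<^sup>+\<theta>. ennreal (\<theta>\<^sup>2) \<partial>?M)"
      by (rule nn_integral_cmult) (rule iter_meas_cong, measurable)
    moreover have "(\<integral>\<^sup>+\<theta>. ennreal b \<partial>?M) = ennreal b"
      using M.emeasure_space_1 by simp
    ultimately show ?thesis by simp
  qed
  also have "\<dots> \<le> ennreal \<gamma> * ennreal (x\<^sup>2 + B0) + ennreal b"
    by (intro add_mono mult_left_mono Suc.IH) auto
  also have "\<dots> = ennreal (\<gamma> * (x\<^sup>2 + B0) + b)"
    using gam b B0 by (simp add: ennreal_mult[symmetric] ennreal_plus[symmetric] del: ennreal_plus)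
  also have "\<dots> \<le> ennreal (x\<^sup>2 + B0)"
  proof (rule ennreal_leI)
    have "b = (1 - \<gamma>) * B0" unfolding B0_def using gam by simp
    moreover have "\<gamma> * x\<^sup>2 \<le> x\<^sup>2" using gam by (simp add: mult_left_le_one_le)
    ultimately show "\<gamma> * (x\<^sup>2 + B0) + b \<le> x\<^sup>2 + B0" by (simp add: algebra_simps)
  qed
  finally show ?case .
qed

lemma oscint:
  assumes M: "prob_space M" "sets M = sets borel" and V: "(\<integral>\<^sup>+t. ennreal (t\<^sup>2) \<partial>M) \<le> ennreal c"
    and c: "0 \<le> c" and g: "bm B g" and og: "osc L g" and L: "0 \<le> L"
  shows "\<bar>g x - (\<integral>t. g t \<partial>M)\<bar> \<le> L * (2 + bet * x\<^sup>2 + bet * c)"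
proof -
  interpret M: prob_space M by fact
  have spM: "space M = UNIV" using sets_eq_imp_space_eq[OF M(2)] by simp
  have mc: "f \<in> borel \<rightarrow>\<^sub>M N \<Longrightarrow> f \<in> M \<rightarrow>\<^sub>M N" for f and N :: "'b measure"
    by (subst measurable_cong_sets[OF M(2) refl])
  have gm[measurable]: "g \<in> borel_measurable M" using g by (auto simp: bm_def intro: mc)
  have gi: "integrable M g" using g gm by (intro M.integrable_const_bound[where B=B]) (auto simp: bm_def)
  have vm: "(\<lambda>t. t\<^sup>2) \<in> borel_measurable M" by (intro mc) measurable
  have vi: "integrable M (\<lambda>t. t\<^sup>2)"
    by (rule integrableI_nonneg[OF vm]) (use V in \<open>auto simp: top.not_eq_extremum intro: le_less_trans\<close>)
  have "ennreal (\<integral>t. t\<^sup>2 \<partial>M) = (\<integral>\<^sup>+t. ennreal (t\<^sup>2) \<partial>M)"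
    by (rule nn_integral_eq_integral[symmetric]) (use vi in auto)
  with V have "ennreal (\<integral>t. t\<^sup>2 \<partial>M) \<le> ennreal c" by simp
  then have vc: "(\<integral>t. t\<^sup>2 \<partial>M) \<le> c" using ennreal_le_iff[OF c] by blast
  have og': "\<bar>g u - g v\<bar> \<le> L * (2 + bet * u\<^sup>2 + bet * v\<^sup>2)" for u v using og unfolding osc_def by blast
  have "g x - (\<integral>t. g t \<partial>M) = (\<integral>t. g x - g t \<partial>M)"
    using gi by (simp add: M.prob_space)
  also have "\<bar>\<dots>\<bar> \<le> (\<integral>t. L * (2 + bet * x\<^sup>2) + (L * bet) * t\<^sup>2 \<partial>M)"
  proof (rule integral_abs_bound_integral)
    show "integrable M (\<lambda>t. g x - g t)" using gi by simp
    show "integrable M (\<lambda>t. L * (2 + bet * x\<^sup>2) + (L * bet) * t\<^sup>2)" using vi by simp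
    fix t show "\<bar>g x - g t\<bar> \<le> L * (2 + bet * x\<^sup>2) + (L * bet) * t\<^sup>2"
      using og'[of x t] by (simp add: algebra_simps)
  qed
  also have "\<dots> = L * (2 + bet * x\<^sup>2) + (L * bet) * (\<integral>t. t\<^sup>2 \<partial>M)"
    using vi by (simp add: M.prob_space)
  also have "\<dots> \<le> L * (2 + bet * x\<^sup>2) + (L * bet) * c"
    using vc L bet_pos by (intro add_left_mono mult_left_mono) auto
  finally show ?thesis by (simp add: algebra_simps)
qed

definition "C0 = 1/2 * (2 + bet * B0)"

lemma step_bound:
  assumes A: "A \<in> sets borel"
  shows "\<bar>(Pop k ^^ n) (indicator A) x - (Pop k ^^ (m + n)) (indicator A) 0\<bar>
          \<le> ab ^ n * (1/2) * (2 + bet * x\<^sup>2 + bet * B0)"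
proof -
  define g where "g = (Pop k ^^ n) (indicator A)"
  have b1: "bm 1 (indicator A :: real \<Rightarrow> real)" using A by (auto simp: bm_def)
  have bg: "bm 1 g" unfolding g_def by (rule bm_Pn[OF b1])
  have og: "osc (ab ^ n * (1/2)) g" unfolding g_def by (rule contract_iter[OF b1 osc_indicator]) simp
  have "(Pop k ^^ (m + n)) (indicator A) 0 = (Pop k ^^ m) g 0"
    unfolding g_def by (simp add: funpow_add)
  also have "\<dots> = (\<integral>t. g t \<partial>kernel_iter (Kd k) m 0)"
    by (rule iter_int[OF bg, symmetric])
  finally have e: "(Pop k ^^ (m + n)) (indicator A) 0 = (\<integral>t. g t \<partial>kernel_iter (Kd k) m 0)" .
  have "\<bar>g x - (\<integral>t. g t \<partial>kernel_iter (Kd k) m 0)\<bar> \<le> ab ^ n * (1/2) * (2 + bet * x\<^sup>2 + bet * B0)"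
    by (rule oscint[OF iter_prob' _ B0 bg og]) (use iter_V[of m 0] ab in auto)
  then show ?thesis unfolding e g_def .
qed

lemma ab_pow_lim: "(\<lambda>n. c * ab ^ n) \<longlonglongrightarrow> 0"
  using LIMSEQ_power_zero[of ab] ab by (auto intro: tendsto_mult_right_zero)

definition "pif A = lim (\<lambda>n. (Pop k ^^ n) (indicator A) 0)"

lemma pif_conv:
  assumes A: "A \<in> sets borel"
  shows "(\<lambda>n. (Pop k ^^ n) (indicator A) 0) \<longlonglongrightarrow> pif A"
proof -
  define X where "X n = (Pop k ^^ n) (indicator A) 0" for n
  have c: "\<bar>X n - X (m + n)\<bar> \<le> C0 * ab ^ n" for m n
    using step_bound[OF A, of n 0 m] unfolding X_def C0_def by (simp add: algebra_simps)
  have "Cauchy X"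
  proof (rule CauchyI)
    fix e :: real assume e: "0 < e"
    from ab_pow_lim[of C0] have "eventually (\<lambda>n. C0 * ab ^ n < e / 2) sequentially"
      using e by (intro order_tendstoD) auto
    then obtain M where M: "C0 * ab ^ M < e / 2" by (auto simp: eventually_sequentially)
    show "\<exists>M. \<forall>m\<ge>M. \<forall>n\<ge>M. norm (X m - X n) < e"
    proof (intro exI allI impI)
      fix m n assume "M \<le> m" "M \<le> n"
      then have "X m = X ((m - M) + M)" "X n = X ((n - M) + M)" by auto
      then have "\<bar>X M - X m\<bar> \<le> C0 * ab ^ M" "\<bar>X M - X n\<bar> \<le> C0 * ab ^ M" using c by metis+
      then show "norm (X m - X n) < e" using M by simp
    qed
  qed
  then have "X \<longlonglongrightarrow> lim X" by (simp add: Cauchy_convergent_iff convergent_LIMSEQ_iff)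
  then show ?thesis unfolding X_def pif_def .
qed

lemma pif_bound:
  assumes A: "A \<in> sets borel"
  shows "\<bar>(Pop k ^^ n) (indicator A) x - pif A\<bar> \<le> ab ^ n * (1/2) * (2 + bet * x\<^sup>2 + bet * B0)"
proof -
  have "(\<lambda>m. (Pop k ^^ (m + n)) (indicator A) 0) \<longlonglongrightarrow> pif A"
    using LIMSEQ_ignore_initial_segment[OF pif_conv[OF A], of n] .
  then have "(\<lambda>m. \<bar>(Pop k ^^ n) (indicator A) x - (Pop k ^^ (m + n)) (indicator A) 0\<bar>)
      \<longlonglongrightarrow> \<bar>(Pop k ^^ n) (indicator A) x - pif A\<bar>"
    by (intro tendsto_intros)
  then show ?thesis
    by (rule LIMSEQ_le_const2) (use step_bound[OF A] in auto)
qed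

lemma X_measure: "A \<in> sets borel \<Longrightarrow> (Pop k ^^ n) (indicator A) x = measure (kernel_iter (Kd k) n x) A"
  by (rule iter_measure[symmetric])

lemma pif_measure_bound:
  assumes A: "A \<in> sets borel"
  shows "\<bar>measure (kernel_iter (Kd k) n x) A - pif A\<bar> \<le> ab ^ n * (1/2) * (2 + bet * x\<^sup>2 + bet * B0)"
  using pif_bound[OF A] X_measure[OF A] by simp

lemma pif_conv_measure:
  assumes A: "A \<in> sets borel"
  shows "(\<lambda>n. measure (kernel_iter (Kd k) n 0) A) \<longlonglongrightarrow> pif A"
  using pif_conv[OF A] X_measure[OF A] by simp

lemma pif_nonneg: "A \<in> sets borel \<Longrightarrow> 0 \<le> pif A"
  by (rule LIMSEQ_le_const[OF pif_conv_measure]) auto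

lemma pif_UNIV: "pif UNIV = 1"
proof -
  have "(\<lambda>n. measure (kernel_iter (Kd k) n 0) UNIV) = (\<lambda>n. 1)"
    using prob_space.prob_space[OF iter_prob'(1)] by simp
  then have "(\<lambda>n. 1::real) \<longlonglongrightarrow> pif UNIV" using pif_conv_measure[of UNIV] by simp
  then show ?thesis using LIMSEQ_unique[OF _ tendsto_const] by metis
qed

lemma pif_empty: "pif {} = 0"
proof -
  have "(\<lambda>n. 0::real) \<longlonglongrightarrow> pif {}" using pif_conv_measure[of "{}"] by simp
  then show ?thesis using LIMSEQ_unique[OF _ tendsto_const] by metis
qed

lemma pif_Un:
  assumes "A \<in> sets borel" "B \<in> sets borel" "A \<inter> B = {}"
  shows "pif (A \<union> B) = pif A + pif B"
proof -
  have "(\<lambda>n. measure (kernel_iter (Kd k) n 0) (A \<union> B))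
     = (\<lambda>n. measure (kernel_iter (Kd k) n 0) A + measure (kernel_iter (Kd k) n 0) B)"
  proof
    fix n
    interpret M: prob_space "kernel_iter (Kd k) n 0" by (rule iter_prob')
    show "measure (kernel_iter (Kd k) n 0) (A \<union> B) = measure (kernel_iter (Kd k) n 0) A + measure (kernel_iter (Kd k) n 0) B"
      using assms iter_prob'(2) by (intro M.finite_measure_Union) auto
  qed
  moreover have "(\<lambda>n. measure (kernel_iter (Kd k) n 0) A + measure (kernel_iter (Kd k) n 0) B) \<longlonglongrightarrow> pif A + pif B"
    using assms by (intro tendsto_add pif_conv_measure)
  ultimately show ?thesis using pif_conv_measure[of "A \<union> B"] assms LIMSEQ_unique by (metis sets.Un)
qed

lemma pif_mono:
  assumes "A \<subseteq> B" "B \<in> sets borel" "A \<in> sets borel"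
  shows "pif A \<le> pif B"
proof (rule LIMSEQ_le[OF pif_conv_measure pif_conv_measure])
  show "\<exists>N. \<forall>n\<ge>N. measure (kernel_iter (Kd k) n 0) A \<le> measure (kernel_iter (Kd k) n 0) B"
  proof (intro exI allI impI)
    fix n
    interpret M: prob_space "kernel_iter (Kd k) n 0" by (rule iter_prob')
    show "measure (kernel_iter (Kd k) n 0) A \<le> measure (kernel_iter (Kd k) n 0) B"
      using assms iter_prob'(2) by (intro M.finite_measure_mono) auto
  qed
qed (use assms in auto)

lemma pif_sums:
  assumes A: "range A \<subseteq> sets borel" and dA: "disjoint_family A"
  shows "(\<lambda>i. pif (A i)) sums pif (\<Union>i. A i)"
proof -
  define U where "U = (\<Union>i. A i)"
  define Uk where "Uk k = (\<Union>i<k. A i)" for k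
  have Us: "U \<in> sets borel" unfolding U_def using A by auto
  have Uks: "Uk k \<in> sets borel" for k unfolding Uk_def using A by auto
  have fin: "(\<Sum>i<k. pif (A i)) = pif (Uk k)" for k
  proof (induction k)
    case 0 then show ?case by (simp add: Uk_def pif_empty)
  next
    case (Suc k)
    have "Uk (Suc k) = Uk k \<union> A k" unfolding Uk_def by (auto simp: lessThan_Suc)
    moreover have "Uk k \<inter> A k = {}"
    proof -
      have "A i \<inter> A k = {}" if "i < k" for i
        using dA that unfolding disjoint_family_on_def by (metis iso_tuple_UNIV_I less_irrefl)
      then show ?thesis unfolding Uk_def by auto
    qed
    ultimately have "pif (Uk (Suc k)) = pif (Uk k) + pif (A k)"
      using Uks A by (simp add: pif_Un)
    then show ?case using Suc by simp
  qed
  have split: "pif U = pif (Uk k) + pif (U - Uk k)" for k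
  proof -
    have "Uk k \<subseteq> U" unfolding Uk_def U_def by auto
    then have "U = Uk k \<union> (U - Uk k)" by auto
    then have "pif U = pif (Uk k \<union> (U - Uk k))" by simp
    also have "\<dots> = pif (Uk k) + pif (U - Uk k)" using Uks Us by (intro pif_Un) auto
    finally show ?thesis .
  qed
  have "(\<lambda>k. \<Sum>i<k. pif (A i)) \<longlonglongrightarrow> pif U"
    unfolding LIMSEQ_iff
  proof (intro allI impI)
    fix r :: real assume r: "0 < r"
    from ab_pow_lim[of C0] have "eventually (\<lambda>n. C0 * ab ^ n < r / 2) sequentially"
      using r by (intro order_tendstoD) auto
    then obtain n where n: "C0 * ab ^ n < r / 2" by (auto simp: eventually_sequentially)
    let ?M = "kernel_iter (Kd k) n 0"
    interpret M: prob_space ?M by (rule iter_prob')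
    have sM: "sets ?M = sets borel" by (rule iter_prob')
    have "(\<lambda>j. measure ?M (Uk j)) \<longlonglongrightarrow> measure ?M (\<Union>j. Uk j)"
    proof (intro M.finite_Lim_measure_incseq)
      show "incseq Uk" unfolding incseq_def Uk_def by (intro allI impI UN_mono) auto
    qed (use Uks sM in auto)
    moreover have "(\<Union>j. Uk j) = U" unfolding Uk_def U_def by auto
    ultimately have "(\<lambda>j. measure ?M (Uk j)) \<longlonglongrightarrow> measure ?M U" by simp
    then obtain K where K: "\<And>j. K \<le> j \<Longrightarrow> \<bar>measure ?M (Uk j) - measure ?M U\<bar> < r / 2"
      using r unfolding LIMSEQ_iff by (metis half_gt_zero real_norm_def)
    show "\<exists>no. \<forall>j\<ge>no. norm ((\<Sum>i<j. pif (A i)) - pif U) < r"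
    proof (intro exI allI impI)
      fix j assume j: "K \<le> j"
      have Ds: "U - Uk j \<in> sets borel" using Us Uks by auto
      have "pif (U - Uk j) \<le> measure ?M (U - Uk j) + C0 * ab ^ n"
        using pif_measure_bound[OF Ds, of n 0] unfolding C0_def by (simp add: algebra_simps)
      also have "measure ?M (U - Uk j) = measure ?M U - measure ?M (Uk j)"
        using Us Uks sM by (intro M.finite_measure_Diff) (auto simp: Uk_def U_def)
      also have "measure ?M U - measure ?M (Uk j) + C0 * ab ^ n < r" using K[OF j] n by arith
      finally have "pif (U - Uk j) < r" .
      moreover have "0 \<le> pif (U - Uk j)" using Ds by (rule pif_nonneg)
      ultimately show "norm ((\<Sum>i<j. pif (A i)) - pif U) < r"
        using split[of j] fin[of j] by simp
    qed
  qed
  then show ?thesis unfolding sums_def U_def .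
qed

definition "pim = measure_of UNIV (sets borel) (\<lambda>A. ennreal (pif A))"

lemma sigma_borel: "sigma_algebra UNIV (sets (borel :: real measure))"
  using sets.sigma_algebra_axioms[of "borel :: real measure"] by simp

lemma pim_emeasure: "A \<in> sets borel \<Longrightarrow> emeasure pim A = ennreal (pif A)"
  unfolding pim_def
proof (rule emeasure_measure_of_sigma[OF sigma_borel])
  show "positive (sets borel) (\<lambda>A. ennreal (pif A))" by (simp add: positive_def pif_empty)
  show "countably_additive (sets borel) (\<lambda>A. ennreal (pif A))"
    unfolding countably_additive_def
  proof (intro allI impI)
    fix A :: "nat \<Rightarrow> real set" assume A: "range A \<subseteq> sets borel" "disjoint_family A"
    have s: "(\<lambda>i. pif (A i)) sums pif (\<Union>i. A i)" by (rule pif_sums[OF A])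
    have "(\<Sum>i. ennreal (pif (A i))) = ennreal (\<Sum>i. pif (A i))"
      using A s by (intro suminf_ennreal2 pif_nonneg sums_summable) auto
    also have "(\<Sum>i. pif (A i)) = pif (\<Union>i. A i)" using s by (rule sums_unique[symmetric])
    finally show "(\<Sum>i. ennreal (pif (A i))) = ennreal (pif (\<Union> (range A)))" by simp
  qed
qed

lemma sets_pim[simp]: "sets pim = sets borel"
  unfolding pim_def using sigma_borel
  by (simp add: sets_measure_of sigma_algebra.sigma_sets_eq)

lemma space_pim[simp]: "space pim = UNIV"
  using sets_eq_imp_space_eq[OF sets_pim] by simp

lemma prob_pim: "prob_space pim"
proof
  show "emeasure pim (space pim) = 1" using pim_emeasure[of UNIV] by (simp add: pif_UNIV)
qed

lemma pim_measure: "A \<in> sets borel \<Longrightarrow> measure pim A = pif A"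
  using pim_emeasure pif_nonneg by (simp add: measure_def)

lemma pim_invariant: "bind pim (Kd k) = pim"
proof (rule measure_eqI)
  interpret P: prob_space pim by (rule prob_pim)
  have Km: "Kd k \<in> pim \<rightarrow>\<^sub>M subprob_algebra borel"
    by (subst measurable_cong_sets[OF sets_pim refl]) (rule Kd_meas_sub)
  show "sets (bind pim (Kd k)) = sets pim" by (subst sets_bind[where N=borel]) auto
  fix A assume "A \<in> sets (bind pim (Kd k))"
  then have A: "A \<in> sets borel" by (subst (asm) sets_bind[where N=borel]) auto
  define g where "g = Pop k (indicator A)"
  have b1: "bm 1 (indicator A :: real \<Rightarrow> real)" using A by (auto simp: bm_def)
  have bg: "bm 1 g" unfolding g_def by (rule bm_Pop[OF b1])
  have gm[measurable]: "g \<in> borel_measurable borel" using bg by (simp add: bm_def)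
  have g01: "0 \<le> g x" "g x \<le> 1" for x
    unfolding g_def using Pop_indicator[OF A, of x] prob_space.prob_le_1[OF prob_Kd] by auto
  have gpm: "g \<in> borel_measurable pim" by (subst measurable_cong_sets[OF sets_pim refl]) (rule gm)
  have gi: "integrable pim g" using g01 gpm by (intro P.integrable_const_bound[where B=1]) auto
  have "emeasure (bind pim (Kd k)) A = (\<integral>\<^sup>+\<theta>. emeasure (Kd k \<theta>) A \<partial>pim)"
    using A by (intro emeasure_bind[OF _ Km]) auto
  also have "\<dots> = (\<integral>\<^sup>+\<theta>. ennreal (g \<theta>) \<partial>pim)"
    unfolding g_def using A by (intro nn_integral_cong) (simp add: Pop_indicator emeasure_Kd)
  also have "\<dots> = ennreal (\<integral>\<theta>. g \<theta> \<partial>pim)"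
    using gi g01 by (intro nn_integral_eq_integral) auto
  also have "(\<integral>\<theta>. g \<theta> \<partial>pim) = pif A"
  proof -
    have 1: "(\<lambda>n. (\<integral>t. g t \<partial>kernel_iter (Kd k) n 0)) \<longlonglongrightarrow> pif A"
    proof -
      have "(\<integral>t. g t \<partial>kernel_iter (Kd k) n 0) = (Pop k ^^ Suc n) (indicator A) 0" for n
        using iter_int[OF bg, of n 0] unfolding g_def by (simp add: funpow_Suc_right del: funpow.simps)
      then show ?thesis using LIMSEQ_Suc[OF pif_conv[OF A]] by simp
    qed
    have 2: "(\<lambda>n. (\<integral>t. g t \<partial>kernel_iter (Kd k) n 0)) \<longlonglongrightarrow> (\<integral>\<theta>. g \<theta> \<partial>pim)"
    proof (rule approx_lim[OF _ ab_pow_lim[of C0]])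
      fix n
      show "\<bar>(\<integral>t. g t \<partial>kernel_iter (Kd k) n 0) - (\<integral>\<theta>. g \<theta> \<partial>pim)\<bar> \<le> C0 * ab ^ n"
      proof (rule SF[OF iter_prob' prob_pim sets_pim _ gm g01])
        fix B :: "real set" assume B: "B \<in> sets borel"
        show "\<bar>measure (kernel_iter (Kd k) n 0) B - measure pim B\<bar> \<le> C0 * ab ^ n"
          using pif_measure_bound[OF B, of n 0] pim_measure[OF B] unfolding C0_def
          by (simp add: algebra_simps)
      qed
    qed
    from 1 2 show ?thesis using LIMSEQ_unique by blast
  qed
  also have "ennreal (pif A) = emeasure pim A" using pim_emeasure[OF A] by simp
  finally show "emeasure (bind pim (Kd k)) A = emeasure pim A" .
qed

lemma tv_bound:
  "tv_dist (kernel_iter (Kd k) n x) pim \<le> (1/2 * (2 + bet * x\<^sup>2 + bet * B0)) * ab ^ n"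
  unfolding tv_dist_def
proof (rule cSUP_least)
  show "sets borel \<noteq> {}" by auto
  fix A :: "real set" assume A: "A \<in> sets borel"
  show "\<bar>measure (kernel_iter (Kd k) n x) A - measure pim A\<bar> \<le> 1 / 2 * (2 + bet * x\<^sup>2 + bet * B0) * ab ^ n"
    using pif_measure_bound[OF A, of n x] pim_measure[OF A] by (simp add: algebra_simps)
qed

theorem ergodic: "geom_ergodic_to (Kd k) pim"
  unfolding geom_ergodic_to_def
proof (intro conjI)
  show "prob_space pim" by (rule prob_pim)
  show "sets pim = sets borel" by simp
  show "bind pim (Kd k) = pim" by (rule pim_invariant)
  show "\<exists>\<rho>\<ge>0. \<rho> < 1 \<and> (\<forall>x. \<exists>C. \<forall>n. tv_dist (kernel_iter (Kd k) n x) pim \<le> C * \<rho> ^ n)"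
  proof -
    have "\<forall>x. \<exists>C. \<forall>n. tv_dist (kernel_iter (Kd k) n x) pim \<le> C * ab ^ n"
      using tv_bound by blast
    then show ?thesis using ab by (intro exI[of _ ab]) auto
  qed
qed

lemma pim_bound0:
  "A \<in> sets borel \<Longrightarrow> \<bar>(Pop k ^^ n) (indicator A) 0 - measure pim A\<bar> \<le> C0 * ab ^ n"
  using pif_bound[of A n 0] pim_measure[of A] unfolding C0_def by (simp add: algebra_simps)

end

lemma nd_moment2:
  assumes s: "0 < \<sigma>"
  shows "has_bochner_integral lborel (\<lambda>t. normal_density \<mu> \<sigma> t * t\<^sup>2) (\<sigma>\<^sup>2 + \<mu>\<^sup>2)"
proof -
  have h1: "has_bochner_integral lborel (\<lambda>t. normal_density \<mu> \<sigma> t * (t - \<mu>) ^ 2) (\<sigma>\<^sup>2)"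
    using normal_moment_even[OF s, where k=1 and \<mu>=\<mu>] by (simp add: power2_eq_square)
  have h2: "has_bochner_integral lborel (\<lambda>t. 2 * \<mu> * (normal_density \<mu> \<sigma> t * t)) (2 * \<mu> * \<mu>)"
    by (rule has_bochner_integral_mult_right[OF normal_moment_nz_1[OF s]])
  have h3: "has_bochner_integral lborel (\<lambda>t. \<mu>\<^sup>2 * normal_density \<mu> \<sigma> t) (\<mu>\<^sup>2 * 1)"
    by (rule has_bochner_integral_mult_right) (use integral_normal_density[OF s] integrable_normal_density[OF s] in \<open>simp add: has_bochner_integral_iff\<close>)
  have X: "has_bochner_integral lborel (\<lambda>t. normal_density \<mu> \<sigma> t * (t - \<mu>) ^ 2 + 2 * \<mu> * (normal_density \<mu> \<sigma> t * t) - \<mu>\<^sup>2 * normal_density \<mu> \<sigma> t)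
     (\<sigma>\<^sup>2 + 2 * \<mu> * \<mu> - \<mu>\<^sup>2 * 1)"
    by (intro has_bochner_integral_diff has_bochner_integral_add h1 h2 h3)
  have F: "(\<lambda>t. normal_density \<mu> \<sigma> t * (t - \<mu>) ^ 2 + 2 * \<mu> * (normal_density \<mu> \<sigma> t * t) - \<mu>\<^sup>2 * normal_density \<mu> \<sigma> t)
      = (\<lambda>t. normal_density \<mu> \<sigma> t * t\<^sup>2)"
    by (rule ext) (simp add: power2_eq_square algebra_simps)
  have V: "\<sigma>\<^sup>2 + 2 * \<mu> * \<mu> - \<mu>\<^sup>2 * 1 = \<sigma>\<^sup>2 + \<mu>\<^sup>2" by (simp add: power2_eq_square)
  from X[unfolded F V] show ?thesis .
qed

lemma nd_minor:
  assumes S: "0 < S" and mu: "\<bar>\<mu>\<bar> \<le> M"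
  shows "exp (- M\<^sup>2 / S) / 2 * normal_density 0 (sqrt (S / 2)) t \<le> normal_density \<mu> (sqrt S) t"
proof -
  have e1: "normal_density \<mu> (sqrt S) t = 1 / sqrt (2 * pi * S) * exp (- (t - \<mu>)\<^sup>2 / (2 * S))"
    using S by (simp add: normal_density_def)
  have e2: "normal_density 0 (sqrt (S / 2)) t = 1 / sqrt (pi * S) * exp (- t\<^sup>2 / S)"
    using S by (simp add: normal_density_def)
  have sq: "(t - \<mu>)\<^sup>2 \<le> 2 * t\<^sup>2 + 2 * M\<^sup>2"
  proof -
    have "\<bar>\<mu>\<bar>\<^sup>2 \<le> M\<^sup>2" by (rule power_mono[OF mu abs_ge_zero])
    then have "\<mu>\<^sup>2 \<le> M\<^sup>2" by simp
    moreover have "0 \<le> (t + \<mu>)\<^sup>2" by simp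
    ultimately show ?thesis by (simp add: power2_eq_square algebra_simps)
  qed
  have ex: "exp (- M\<^sup>2 / S) * exp (- t\<^sup>2 / S) \<le> exp (- (t - \<mu>)\<^sup>2 / (2 * S))"
  proof -
    have "(t - \<mu>)\<^sup>2 / (2 * S) \<le> (2 * t\<^sup>2 + 2 * M\<^sup>2) / (2 * S)"
      by (rule divide_right_mono[OF sq]) (use S in simp)
    also have "\<dots> = M\<^sup>2 / S + t\<^sup>2 / S" using S by (simp add: field_simps)
    finally have "- M\<^sup>2 / S + - t\<^sup>2 / S \<le> - (t - \<mu>)\<^sup>2 / (2 * S)" by simp
    then show ?thesis by (simp add: exp_add[symmetric])
  qed
  have sqr: "1 / 2 * (1 / sqrt (pi * S)) \<le> 1 / sqrt (2 * pi * S)"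
  proof -
    have "sqrt (2 * pi * S) \<le> sqrt (4 * pi * S)" using S by (intro real_sqrt_le_mono) simp
    also have "sqrt (4 * pi * S) = 2 * sqrt (pi * S)"
      by (simp add: real_sqrt_mult)
    finally have "sqrt (2 * pi * S) \<le> 2 * sqrt (pi * S)" .
    moreover have "0 < sqrt (2 * pi * S)" using S by simp
    ultimately show ?thesis by (simp add: field_simps)
  qed
  have "exp (- M\<^sup>2 / S) / 2 * normal_density 0 (sqrt (S / 2)) t
      = (1 / 2 * (1 / sqrt (pi * S))) * (exp (- M\<^sup>2 / S) * exp (- t\<^sup>2 / S))"
    unfolding e2 by simp
  also have "\<dots> \<le> (1 / sqrt (2 * pi * S)) * exp (- (t - \<mu>)\<^sup>2 / (2 * S))"
    using S by (intro mult_mono sqr ex) auto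
  also have "\<dots> = normal_density \<mu> (sqrt S) t" using e1 by simp
  finally show ?thesis .
qed

definition gC :: "real \<Rightarrow> real" where "gC a = (1 + a\<^sup>2) / 2"
definition bC :: "real \<Rightarrow> real \<Rightarrow> real \<Rightarrow> real" where "bC a D S = S + D\<^sup>2 + 2 * a\<^sup>2 * D\<^sup>2 / (1 - a\<^sup>2)"
definition RC :: "real \<Rightarrow> real \<Rightarrow> real \<Rightarrow> real" where "RC a D S = 4 * bC a D S / (1 - a\<^sup>2) + 1"
definition MC :: "real \<Rightarrow> real \<Rightarrow> real \<Rightarrow> real" where "MC a D S = a * sqrt (RC a D S) + D"
definition alC :: "real \<Rightarrow> real \<Rightarrow> real \<Rightarrow> real" where "alC a D S = exp (- (MC a D S)\<^sup>2 / S) / 2"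
definition ndC :: "real \<Rightarrow> real \<Rightarrow> real" where "ndC S = normal_density 0 (sqrt (S / 2))"

lemma mean_sq_bound:
  fixes a D m \<theta> :: real
  assumes a: "0 \<le> a" "a < 1" and e: "\<bar>m - a * \<theta>\<bar> \<le> D"
  shows "m\<^sup>2 \<le> gC a * \<theta>\<^sup>2 + D\<^sup>2 + 2 * a\<^sup>2 * D\<^sup>2 / (1 - a\<^sup>2)"
proof -
  define e where "e = m - a * \<theta>"
  define \<epsilon> where "\<epsilon> = (1 - a\<^sup>2) / 2"
  have a2: "a\<^sup>2 < 1" using mult_left_mono[of a 1 a] a by (simp add: power2_eq_square)
  have ep: "0 < \<epsilon>" unfolding \<epsilon>_def using a2 by simp
  have "0 \<le> (\<epsilon> * \<theta> - a * e)\<^sup>2 / \<epsilon>" using ep by simp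
  then have k: "2 * a * \<theta> * e \<le> \<epsilon> * \<theta>\<^sup>2 + a\<^sup>2 * e\<^sup>2 / \<epsilon>"
    using ep by (simp add: power2_eq_square field_simps)
  have "\<bar>e\<bar>\<^sup>2 \<le> D\<^sup>2" unfolding e_def by (rule power_mono[OF e abs_ge_zero])
  then have e2: "e\<^sup>2 \<le> D\<^sup>2" by simp
  have "a\<^sup>2 * e\<^sup>2 / \<epsilon> \<le> a\<^sup>2 * D\<^sup>2 / \<epsilon>" using e2 ep by (intro divide_right_mono mult_left_mono) auto
  have "m\<^sup>2 = a\<^sup>2 * \<theta>\<^sup>2 + 2 * a * \<theta> * e + e\<^sup>2" unfolding e_def by (simp add: power2_eq_square algebra_simps)
  also have "\<dots> \<le> a\<^sup>2 * \<theta>\<^sup>2 + (\<epsilon> * \<theta>\<^sup>2 + a\<^sup>2 * D\<^sup>2 / \<epsilon>) + D\<^sup>2"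
    using k e2 \<open>a\<^sup>2 * e\<^sup>2 / \<epsilon> \<le> a\<^sup>2 * D\<^sup>2 / \<epsilon>\<close> by linarith
  also have "\<dots> = gC a * \<theta>\<^sup>2 + D\<^sup>2 + 2 * a\<^sup>2 * D\<^sup>2 / (1 - a\<^sup>2)"
    unfolding gC_def \<epsilon>_def using a2 by (simp add: field_simps)
  finally show ?thesis .
qed

lemma mixture_gekernel:
  fixes J :: "'j set" and w m :: "'j \<Rightarrow> real \<Rightarrow> real" and k :: "real \<Rightarrow> real \<Rightarrow> real"
  assumes J: "finite J" and w0: "\<And>j \<theta>. j \<in> J \<Longrightarrow> 0 \<le> w j \<theta>" and w1: "\<And>\<theta>. (\<Sum>j\<in>J. w j \<theta>) = 1"
    and mb: "\<And>j \<theta>. j \<in> J \<Longrightarrow> \<bar>m j \<theta> - a * \<theta>\<bar> \<le> D"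
    and wm[measurable]: "\<And>j. w j \<in> borel_measurable borel" and mm[measurable]: "\<And>j. m j \<in> borel_measurable borel"
    and a: "0 \<le> a" "a < 1" and D: "0 \<le> D" and S: "0 < S"
    and keq: "\<And>\<theta> t. k \<theta> t = (\<Sum>j\<in>J. w j \<theta> * normal_density (m j \<theta>) (sqrt S) t)"
  shows "gekernel k (gC a) (bC a D S) (RC a D S) (alC a D S) (ndC S)"
proof -
  have a2: "a\<^sup>2 < 1" using mult_left_mono[of a 1 a] a by (simp add: power2_eq_square)
  have sS: "0 < sqrt S" using S by simp
  have kf: "k = (\<lambda>\<theta> t. \<Sum>j\<in>J. w j \<theta> * normal_density (m j \<theta>) (sqrt S) t)" using keq by (intro ext) auto
  have b0: "0 \<le> bC a D S" unfolding bC_def using S a2 by (intro add_nonneg_nonneg divide_nonneg_nonneg) auto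
  have mom: "has_bochner_integral lborel (\<lambda>t. k \<theta> t * t\<^sup>2) (\<Sum>j\<in>J. w j \<theta> * (S + (m j \<theta>)\<^sup>2))" for \<theta>
  proof -
    have "has_bochner_integral lborel (\<lambda>t. \<Sum>j\<in>J. w j \<theta> * (normal_density (m j \<theta>) (sqrt S) t * t\<^sup>2)) (\<Sum>j\<in>J. w j \<theta> * (S + (m j \<theta>)\<^sup>2))"
      using nd_moment2[OF sS] S by (intro has_bochner_integral_sum has_bochner_integral_mult_right) auto
    then show ?thesis unfolding keq by (simp add: sum_distrib_right mult.assoc)
  qed
  show ?thesis
  proof (intro gekernel.intro dkernel.intro gekernel_axioms.intro)
    show "case_prod k \<in> borel_measurable (borel \<Otimes>\<^sub>M borel)"
    proof -
      have "(\<lambda>x. \<Sum>j\<in>J. w j (fst x) * (1 / sqrt (2 * pi * (sqrt S)\<^sup>2) * exp (- (snd x - m j (fst x))\<^sup>2 / (2 * (sqrt S)\<^sup>2))))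
         \<in> borel_measurable (borel \<Otimes>\<^sub>M borel)"
      proof (rule borel_measurable_sum)
        fix j
        show "(\<lambda>x. w j (fst x) * (1 / sqrt (2 * pi * (sqrt S)\<^sup>2) * exp (- (snd x - m j (fst x))\<^sup>2 / (2 * (sqrt S)\<^sup>2))))
         \<in> borel_measurable (borel \<Otimes>\<^sub>M borel)" by measurable
      qed
      moreover have "case_prod k = (\<lambda>x. \<Sum>j\<in>J. w j (fst x) * (1 / sqrt (2 * pi * (sqrt S)\<^sup>2) * exp (- (snd x - m j (fst x))\<^sup>2 / (2 * (sqrt S)\<^sup>2))))"
        by (auto simp: kf normal_density_def fun_eq_iff)
      ultimately show ?thesis by simp
    qed
    show "0 \<le> k \<theta> t" for \<theta> t using w0 by (simp add: keq sum_nonneg)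
    have ndi: "has_bochner_integral lborel (normal_density \<mu> (sqrt S)) 1" for \<mu>
      using integral_normal_density[OF sS] integrable_normal_density[OF sS] by (simp add: has_bochner_integral_iff)
    have hk: "has_bochner_integral lborel (k \<theta>) (\<Sum>j\<in>J. w j \<theta> * 1)" for \<theta>
      unfolding kf by (intro has_bochner_integral_sum has_bochner_integral_mult_right ndi)
    show "integrable lborel (k \<theta>)" for \<theta> by (rule integrable.intros[OF hk])
    show "(\<integral>t. k \<theta> t \<partial>lborel) = 1" for \<theta> using has_bochner_integral_integral_eq[OF hk[of \<theta>]] w1 by simp
    show "integrable lborel (\<lambda>t. k \<theta> t * t\<^sup>2)" for \<theta> by (rule integrable.intros[OF mom])
    show "(\<integral>t. k \<theta> t * t\<^sup>2 \<partial>lborel) \<le> gC a * \<theta>\<^sup>2 + bC a D S" for \<theta>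
    proof -
      have "(\<integral>t. k \<theta> t * t\<^sup>2 \<partial>lborel) = (\<Sum>j\<in>J. w j \<theta> * (S + (m j \<theta>)\<^sup>2))"
        using mom by (simp add: has_bochner_integral_integral_eq)
      also have "\<dots> \<le> (\<Sum>j\<in>J. w j \<theta> * (gC a * \<theta>\<^sup>2 + bC a D S))"
      proof (intro sum_mono mult_left_mono w0)
        fix j assume j: "j \<in> J"
        show "S + (m j \<theta>)\<^sup>2 \<le> gC a * \<theta>\<^sup>2 + bC a D S"
          using mean_sq_bound[OF a mb[OF j, of \<theta>]] unfolding bC_def by linarith
      qed
      also have "\<dots> = gC a * \<theta>\<^sup>2 + bC a D S" using w1 by (simp flip: sum_distrib_right)
      finally show ?thesis .
    qed
    show "0 \<le> gC a" unfolding gC_def by simp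
    show "gC a < 1" unfolding gC_def using a2 by simp
    show "0 \<le> bC a D S" by (rule b0)
    have R0: "0 < RC a D S" unfolding RC_def using b0 a2 by (intro add_nonneg_pos divide_nonneg_pos) auto
    show "0 < RC a D S" by (rule R0)
    show "2 * bC a D S < (1 - gC a) * RC a D S"
    proof -
      have "(1 - gC a) * RC a D S = 2 * bC a D S + (1 - a\<^sup>2) / 2"
        unfolding gC_def RC_def using a2 by (simp add: field_simps)
      then show ?thesis using a2 by simp
    qed
    show "ndC S \<in> borel_measurable borel" unfolding ndC_def by measurable
    show "0 \<le> ndC S t" for t unfolding ndC_def by simp
    have sS2: "0 < sqrt (S / 2)" using S by simp
    show "integrable lborel (ndC S)" unfolding ndC_def using integrable_normal_density[OF sS2] .
    show "(\<integral>t. ndC S t \<partial>lborel) = 1" unfolding ndC_def using integral_normal_density[OF sS2] .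
    show "0 < alC a D S" unfolding alC_def by simp
    show "alC a D S < 1"
    proof -
      have "- (MC a D S)\<^sup>2 / S \<le> 0" using S by (simp add: divide_nonpos_pos)
      then have "exp (- (MC a D S)\<^sup>2 / S) \<le> 1" by simp
      then show ?thesis unfolding alC_def by linarith
    qed
    fix \<theta> t assume th: "\<theta>\<^sup>2 \<le> RC a D S"
    have "\<bar>\<theta>\<bar> \<le> sqrt (RC a D S)" using th real_sqrt_le_mono by fastforce
    then have mj: "\<bar>m j \<theta>\<bar> \<le> MC a D S" if "j \<in> J" for j
    proof -
      have "\<bar>m j \<theta>\<bar> \<le> \<bar>a * \<theta>\<bar> + D" using mb[OF that, of \<theta>] by arith
      also have "\<bar>a * \<theta>\<bar> \<le> a * sqrt (RC a D S)" using a \<open>\<bar>\<theta>\<bar> \<le> _\<close> by (simp add: abs_mult mult_left_mono)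
      finally show ?thesis unfolding MC_def by simp
    qed
    have "alC a D S * ndC S t = (\<Sum>j\<in>J. w j \<theta> * (alC a D S * ndC S t))"
      using w1 by (simp flip: sum_distrib_right)
    also have "\<dots> \<le> (\<Sum>j\<in>J. w j \<theta> * normal_density (m j \<theta>) (sqrt S) t)"
      using nd_minor[OF S mj] w0 unfolding alC_def ndC_def by (intro sum_mono mult_left_mono) auto
    also have "\<dots> = k \<theta> t" using keq by simp
    finally show "alC a D S * ndC S t \<le> k \<theta> t" .
  qed
qed

lemma exp_diff_bound: fixes x y :: real shows "\<bar>exp x - exp y\<bar> \<le> \<bar>x - y\<bar> * max (exp x) (exp y)"
proof -
  have key: "exp u - exp v \<le> (u - v) * exp u" if "v \<le> u" for u v :: real
  proof -
    have "1 + (v - u) \<le> exp (v - u)" by (rule exp_ge_add_one_self)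
    then have "exp u * (1 + (v - u)) \<le> exp u * exp (v - u)" by (intro mult_left_mono) auto
    also have "exp u * exp (v - u) = exp v" by (simp flip: exp_add)
    finally show ?thesis by (simp add: algebra_simps)
  qed
  show ?thesis
  proof (cases "y \<le> x")
    case True
    then have "0 \<le> exp x - exp y" using exp_le_cancel_iff[of y x] by linarith
    then have "\<bar>exp x - exp y\<bar> = exp x - exp y" by simp
    also have "\<dots> \<le> (x - y) * exp x" by (rule key[OF True])
    also have "\<dots> \<le> \<bar>x - y\<bar> * max (exp x) (exp y)" by (intro mult_mono) auto
    finally show ?thesis .
  next
    case False
    then have "0 \<le> exp y - exp x" using exp_le_cancel_iff[of x y] by linarith
    then have "\<bar>exp x - exp y\<bar> = exp y - exp x" by simp
    also have "\<dots> \<le> (y - x) * exp y" by (rule key) (use False in simp)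
    also have "\<dots> \<le> \<bar>x - y\<bar> * max (exp x) (exp y)" by (intro mult_mono) auto
    finally show ?thesis .
  qed
qed

definition cG :: "real \<Rightarrow> real \<Rightarrow> real" where
  "cG \<Delta> S = exp (\<Delta>\<^sup>2 / (2 * S)) / S * (\<Delta> + 2 * sqrt (2 * S) * sqrt (2 / pi))"

lemma nd_pointwise:
  assumes S: "0 < S" and d: "\<bar>\<delta>\<bar> \<le> \<Delta>"
  shows "\<bar>normal_density (\<mu> + \<delta>) (sqrt S) t - normal_density \<mu> (sqrt S) t\<bar>
    \<le> \<bar>\<delta>\<bar> * (exp (\<Delta>\<^sup>2 / (2 * S)) / S) * ((\<Delta> + 2 * \<bar>t - \<mu>\<bar>) * normal_density \<mu> (sqrt (2 * S)) t)"
proof -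
  define u where "u = t - \<mu>"
  define x where "x = - (u - \<delta>)\<^sup>2 / (2 * S)"
  define y where "y = - u\<^sup>2 / (2 * S)"
  define c0 where "c0 = 1 / sqrt (2 * pi * S)"
  have c0: "0 < c0" unfolding c0_def using S by simp
  have e1: "normal_density (\<mu> + \<delta>) (sqrt S) t = c0 * exp x"
    unfolding c0_def x_def u_def normal_density_def using S by (simp add: algebra_simps)
  have e2: "normal_density \<mu> (sqrt S) t = c0 * exp y"
    unfolding c0_def y_def u_def normal_density_def using S by simp
  have e3: "normal_density \<mu> (sqrt (2 * S)) t = 1 / sqrt (4 * pi * S) * exp (- u\<^sup>2 / (4 * S))"
    unfolding u_def normal_density_def using S by simp
  have D0: "0 \<le> \<Delta>" using d by simp
  have xy: "\<bar>x - y\<bar> \<le> \<bar>\<delta>\<bar> * (\<Delta> + 2 * \<bar>u\<bar>) / (2 * S)"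
  proof -
    have "x - y = (- (u - \<delta>)\<^sup>2 - - u\<^sup>2) / (2 * S)" unfolding x_def y_def by (simp add: diff_divide_distrib)
    also have "- (u - \<delta>)\<^sup>2 - - u\<^sup>2 = \<delta> * (2 * u - \<delta>)" by (simp add: power2_eq_square algebra_simps)
    finally have "x - y = \<delta> * (2 * u - \<delta>) / (2 * S)" .
    then have "\<bar>x - y\<bar> = \<bar>\<delta>\<bar> * \<bar>2 * u - \<delta>\<bar> / (2 * S)" using S by (simp add: abs_mult)
    also have "\<dots> \<le> \<bar>\<delta>\<bar> * (\<Delta> + 2 * \<bar>u\<bar>) / (2 * S)"
      using S d by (intro divide_right_mono mult_left_mono) auto
    finally show ?thesis .
  qed
  have mx: "max (exp x) (exp y) \<le> exp (\<Delta>\<^sup>2 / (2 * S)) * exp (- u\<^sup>2 / (4 * S))"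
  proof -
    have d2: "\<delta>\<^sup>2 \<le> \<Delta>\<^sup>2" using power_mono[OF d abs_ge_zero, of 2] by simp
    have "0 \<le> (u - 2 * \<delta>)\<^sup>2" by simp
    then have "u\<^sup>2 / 2 - \<delta>\<^sup>2 \<le> (u - \<delta>)\<^sup>2" by (simp add: power2_eq_square algebra_simps)
    then have "- (u - \<delta>)\<^sup>2 \<le> \<delta>\<^sup>2 - u\<^sup>2 / 2" by linarith
    from divide_right_mono[OF this, of "2 * S"] S
    have "x \<le> (\<delta>\<^sup>2 - u\<^sup>2 / 2) / (2 * S)" unfolding x_def by simp
    also have "\<dots> \<le> \<Delta>\<^sup>2 / (2 * S) + - u\<^sup>2 / (4 * S)" using S d2 by (simp add: field_simps)
    finally have 1: "x \<le> \<Delta>\<^sup>2 / (2 * S) + - u\<^sup>2 / (4 * S)" .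
    have "y \<le> - u\<^sup>2 / (4 * S)" unfolding y_def using S by (simp add: field_simps)
    moreover have "0 \<le> \<Delta>\<^sup>2 / (2 * S)" using S by simp
    ultimately have 2: "y \<le> \<Delta>\<^sup>2 / (2 * S) + - u\<^sup>2 / (4 * S)" by simp
    have "exp x \<le> exp (\<Delta>\<^sup>2 / (2 * S) + - u\<^sup>2 / (4 * S))" using 1 by (simp only: exp_le_cancel_iff)
    moreover have "exp y \<le> exp (\<Delta>\<^sup>2 / (2 * S) + - u\<^sup>2 / (4 * S))" using 2 by (simp only: exp_le_cancel_iff)
    ultimately have "max (exp x) (exp y) \<le> exp (\<Delta>\<^sup>2 / (2 * S) + - u\<^sup>2 / (4 * S))" by (rule max.boundedI)
    also have "\<dots> = exp (\<Delta>\<^sup>2 / (2 * S)) * exp (- u\<^sup>2 / (4 * S))" by (rule exp_add)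
    finally show ?thesis .
  qed
  have "\<bar>normal_density (\<mu> + \<delta>) (sqrt S) t - normal_density \<mu> (sqrt S) t\<bar> = c0 * \<bar>exp x - exp y\<bar>"
    using e1 e2 c0 by (simp add: abs_mult flip: right_diff_distrib)
  also have "\<dots> \<le> c0 * (\<bar>x - y\<bar> * max (exp x) (exp y))"
    using c0 by (intro mult_left_mono exp_diff_bound) auto
  also have "\<dots> \<le> c0 * ((\<bar>\<delta>\<bar> * (\<Delta> + 2 * \<bar>u\<bar>) / (2 * S)) * (exp (\<Delta>\<^sup>2 / (2 * S)) * exp (- u\<^sup>2 / (4 * S))))"
    using c0 xy mx by (intro mult_left_mono mult_mono) (auto simp: le_max_iff_disj)
  also have "\<dots> = \<bar>\<delta>\<bar> * (exp (\<Delta>\<^sup>2 / (2 * S)) / S) * ((\<Delta> + 2 * \<bar>u\<bar>) * (c0 / 2 * exp (- u\<^sup>2 / (4 * S))))"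
    using S by (simp add: field_simps)
  also have "\<dots> \<le> \<bar>\<delta>\<bar> * (exp (\<Delta>\<^sup>2 / (2 * S)) / S) * ((\<Delta> + 2 * \<bar>u\<bar>) * (1 / sqrt (4 * pi * S) * exp (- u\<^sup>2 / (4 * S))))"
  proof -
    have "sqrt (4 * pi * S) = sqrt 2 * sqrt (2 * pi * S)" by (simp flip: real_sqrt_mult)
    also have "\<dots> \<le> 2 * sqrt (2 * pi * S)" using S by (intro mult_right_mono) (auto simp: real_sqrt_le_iff[of 2 4, simplified])
    finally have "sqrt (4 * pi * S) \<le> 2 * sqrt (2 * pi * S)" .
    then have "c0 / 2 \<le> 1 / sqrt (4 * pi * S)" unfolding c0_def using S
      by (simp add: field_simps)
    then show ?thesis using S D0 by (intro mult_left_mono mult_right_mono) auto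
  qed
  finally show ?thesis unfolding e3 u_def .
qed

lemma nd_shift_int:
  fixes \<psi> :: "real \<Rightarrow> real"
  assumes S: "0 < S" and d: "\<bar>\<mu>1 - \<mu>2\<bar> \<le> \<Delta>" and p: "bm 1 \<psi>"
  shows "\<bar>(\<integral>t. normal_density \<mu>1 (sqrt S) t * \<psi> t \<partial>lborel) - (\<integral>t. normal_density \<mu>2 (sqrt S) t * \<psi> t \<partial>lborel)\<bar>
          \<le> cG \<Delta> S * \<bar>\<mu>1 - \<mu>2\<bar>"
proof -
  define \<delta> where "\<delta> = \<mu>1 - \<mu>2"
  have m1: "\<mu>1 = \<mu>2 + \<delta>" unfolding \<delta>_def by simp
  have S2: "0 < sqrt (2 * S)" using S by simp
  define K where "K = \<bar>\<delta>\<bar> * (exp (\<Delta>\<^sup>2 / (2 * S)) / S)"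
  have sS: "0 < sqrt S" using S by simp
  define n1 where "n1 = normal_density \<mu>1 (sqrt S)"
  define n2 where "n2 = normal_density \<mu>2 (sqrt S)"
  define q where "q = normal_density \<mu>2 (sqrt (2 * S))"
  define F where "F t = (n1 t - n2 t) * \<psi> t" for t
  define G where "G t = K * (\<Delta> * q t + 2 * (q t * \<bar>t - \<mu>2\<bar> ^ 1))" for t
  have i1: "integrable lborel (\<lambda>t. n1 t * \<psi> t)" unfolding n1_def
    by (rule integrable_mult_bm[OF integrable_normal_density[OF sS] p])
  have i2: "integrable lborel (\<lambda>t. n2 t * \<psi> t)" unfolding n2_def
    by (rule integrable_mult_bm[OF integrable_normal_density[OF sS] p])
  have qi: "integrable lborel q" unfolding q_def by (rule integrable_normal_density[OF S2])
  have qmi: "integrable lborel (\<lambda>t. q t * \<bar>t - \<mu>2\<bar> ^ 1)" unfolding q_def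
    by (rule integrable_normal_moment_abs[OF S2])
  have Fi: "integrable lborel F" unfolding F_def using i1 i2 by (simp add: left_diff_distrib)
  have Gi: "integrable lborel G" unfolding G_def using qi qmi by simp
  have e0: "(\<integral>t. n1 t * \<psi> t \<partial>lborel) - (\<integral>t. n2 t * \<psi> t \<partial>lborel) = (\<integral>t. F t \<partial>lborel)"
    unfolding F_def using i1 i2 by (simp add: left_diff_distrib)
  have pt: "\<bar>F t\<bar> \<le> G t" for t
  proof -
    have ps: "\<bar>\<psi> t\<bar> \<le> 1" using p unfolding bm_def by simp
    have "\<bar>F t\<bar> = \<bar>n1 t - n2 t\<bar> * \<bar>\<psi> t\<bar>" unfolding F_def by (simp add: abs_mult)
    also have "\<dots> \<le> \<bar>n1 t - n2 t\<bar>" using ps by (simp add: mult_left_le)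
    also have "\<dots> \<le> K * ((\<Delta> + 2 * \<bar>t - \<mu>2\<bar>) * q t)"
    proof -
      have "n1 t = normal_density (\<mu>2 + \<delta>) (sqrt S) t" unfolding n1_def \<delta>_def by simp
      moreover have "\<bar>\<delta>\<bar> \<le> \<Delta>" using d unfolding \<delta>_def .
      ultimately show ?thesis using nd_pointwise[OF S, of \<delta> \<Delta> \<mu>2 t] unfolding n2_def q_def K_def by simp
    qed
    also have "\<dots> = G t" unfolding G_def by (simp add: algebra_simps)
    finally show ?thesis .
  qed
  have "\<bar>\<integral>t. F t \<partial>lborel\<bar> \<le> (\<integral>t. G t \<partial>lborel)"
    by (rule integral_abs_bound_integral[OF Fi Gi pt])
  also have "(\<integral>t. G t \<partial>lborel) = K * (\<Delta> * 1 + 2 * (sqrt (2 * S) * sqrt (2 / pi)))"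
  proof -
    have a: "(\<integral>t. q t \<partial>lborel) = 1" unfolding q_def by (rule integral_normal_density[OF S2])
    have b: "(\<integral>t. q t * \<bar>t - \<mu>2\<bar> ^ 1 \<partial>lborel) = sqrt (2 * S) * sqrt (2 / pi)"
      unfolding q_def using integral_normal_moment_abs_odd[OF S2, where k=0 and \<mu>=\<mu>2] by simp
    show ?thesis unfolding G_def using qi qmi a b by simp
  qed
  also have "\<dots> = cG \<Delta> S * \<bar>\<mu>1 - \<mu>2\<bar>" unfolding K_def cG_def \<delta>_def using S by (simp add: field_simps)
  finally show ?thesis unfolding n1_def n2_def e0[unfolded n1_def n2_def] .
qed

lemma telescope:
  assumes k1: "dkernel k1" and k2: "dkernel k2"
    and eps: "\<And>\<psi> \<theta>. bm 1 \<psi> \<Longrightarrow> \<bar>Pop k1 \<psi> \<theta> - Pop k2 \<psi> \<theta>\<bar> \<le> \<epsilon>"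
    and p: "bm 1 \<psi>"
  shows "\<bar>(Pop k1 ^^ n) \<psi> x - (Pop k2 ^^ n) \<psi> x\<bar> \<le> real n * \<epsilon>"
proof (induction n arbitrary: x)
  case 0 then show ?case by simp
next
  case (Suc n)
  interpret K1: dkernel k1 by fact
  interpret K2: dkernel k2 by fact
  define g1 where "g1 = (Pop k1 ^^ n) \<psi>"
  define g2 where "g2 = (Pop k2 ^^ n) \<psi>"
  have b1: "bm 1 g1" unfolding g1_def by (rule K1.bm_Pn[OF p])
  have b2: "bm 1 g2" unfolding g2_def by (rule K2.bm_Pn[OF p])
  have bd: "bm (real n * \<epsilon>) (\<lambda>t. g1 t - g2 t)"
    using b1 b2 Suc.IH unfolding bm_def g1_def g2_def by auto
  have "Pop k1 g1 x - Pop k1 g2 x = Pop k1 (\<lambda>t. g1 t - g2 t) x"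
    unfolding Pop_def using K1.Pop_int[OF b1] K1.Pop_int[OF b2] by (simp add: right_diff_distrib)
  then have "\<bar>Pop k1 g1 x - Pop k1 g2 x\<bar> \<le> real n * \<epsilon>" using K1.Pop_bound[OF bd] by simp
  moreover have "\<bar>Pop k1 g2 x - Pop k2 g2 x\<bar> \<le> \<epsilon>" by (rule eps[OF b2])
  ultimately have "\<bar>Pop k1 g1 x - Pop k2 g2 x\<bar> \<le> real n * \<epsilon> + \<epsilon>" by linarith
  then show ?case unfolding g1_def g2_def by (simp add: algebra_simps)
qed

lemma mix_pert:
  fixes J :: "'j set" and w m :: "'j \<Rightarrow> real"
  assumes J: "finite J" and w0: "\<And>j. j \<in> J \<Longrightarrow> 0 \<le> w j" and w1: "(\<Sum>j\<in>J. w j) = 1"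
    and md: "\<And>j. j \<in> J \<Longrightarrow> \<bar>m j - mE\<bar> \<le> \<Delta>" and S: "0 < S" and p: "bm 1 \<psi>"
  shows "\<bar>(\<integral>t. (\<Sum>j\<in>J. w j * normal_density (m j) (sqrt S) t) * \<psi> t \<partial>lborel)
          - (\<integral>t. normal_density mE (sqrt S) t * \<psi> t \<partial>lborel)\<bar>
      \<le> cG \<Delta> S * (\<Sum>j\<in>J. w j * \<bar>m j - mE\<bar>)"
proof -
  have sS: "0 < sqrt S" using S by simp
  have i1: "integrable lborel (\<lambda>t. normal_density \<mu> (sqrt S) t * \<psi> t)" for \<mu>
    by (rule integrable_mult_bm[OF integrable_normal_density[OF sS] p])
  define I where "I \<mu> = (\<integral>t. normal_density \<mu> (sqrt S) t * \<psi> t \<partial>lborel)" for \<mu>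
  have "(\<integral>t. (\<Sum>j\<in>J. w j * normal_density (m j) (sqrt S) t) * \<psi> t \<partial>lborel)
       = (\<integral>t. (\<Sum>j\<in>J. w j * (normal_density (m j) (sqrt S) t * \<psi> t)) \<partial>lborel)"
    by (simp add: sum_distrib_right mult.assoc)
  also have "\<dots> = (\<Sum>j\<in>J. w j * I (m j))"
    unfolding I_def using i1 by (subst Bochner_Integration.integral_sum) auto
  finally have e1: "(\<integral>t. (\<Sum>j\<in>J. w j * normal_density (m j) (sqrt S) t) * \<psi> t \<partial>lborel) = (\<Sum>j\<in>J. w j * I (m j))" .
  have e2: "(\<integral>t. normal_density mE (sqrt S) t * \<psi> t \<partial>lborel) = (\<Sum>j\<in>J. w j * I mE)"
    unfolding I_def using w1 by (simp flip: sum_distrib_right)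
  have "\<bar>(\<Sum>j\<in>J. w j * I (m j)) - (\<Sum>j\<in>J. w j * I mE)\<bar> = \<bar>\<Sum>j\<in>J. w j * (I (m j) - I mE)\<bar>"
    by (simp add: sum_subtractf right_diff_distrib)
  also have "\<dots> \<le> (\<Sum>j\<in>J. \<bar>w j * (I (m j) - I mE)\<bar>)" by (rule sum_abs)
  also have "\<dots> \<le> (\<Sum>j\<in>J. w j * (cG \<Delta> S * \<bar>m j - mE\<bar>))"
  proof (rule sum_mono)
    fix j assume j: "j \<in> J"
    have "\<bar>I (m j) - I mE\<bar> \<le> cG \<Delta> S * \<bar>m j - mE\<bar>"
      unfolding I_def by (rule nd_shift_int[OF S md[OF j] p])
    then show "\<bar>w j * (I (m j) - I mE)\<bar> \<le> w j * (cG \<Delta> S * \<bar>m j - mE\<bar>)"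
      using w0[OF j] by (simp add: abs_mult mult_left_mono)
  qed
  also have "\<dots> = cG \<Delta> S * (\<Sum>j\<in>J. w j * \<bar>m j - mE\<bar>)"
    by (simp add: sum_distrib_left algebra_simps)
  finally show ?thesis using e1 e2 by simp
qed

context
  fixes Y :: "'a set" and s :: "'a \<Rightarrow> real"
  assumes Yfin: "finite Y" and Yne: "Y \<noteq> {}"
begin

lemma gZ_pos: "0 < gibbs_Z Y s \<theta>"
  unfolding gibbs_Z_def using Yfin Yne by (intro sum_pos) auto

lemma gf_nonneg: "0 \<le> gibbs_f Y s x \<theta>"
  unfolding gibbs_f_def using gZ_pos[of \<theta>] by simp

lemma gf_sum: "(\<Sum>x\<in>Y. gibbs_f Y s x \<theta>) = 1"
proof -
  have "(\<Sum>x\<in>Y. gibbs_f Y s x \<theta>) = (\<Sum>x\<in>Y. exp (\<theta> * s x)) / gibbs_Z Y s \<theta>"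
    unfolding gibbs_f_def by (simp add: sum_divide_distrib)
  then show ?thesis using gZ_pos[of \<theta>] unfolding gibbs_Z_def by simp
qed

lemma gf_meas[measurable]: "(\<lambda>\<theta>. gibbs_f Y s x \<theta>) \<in> borel_measurable borel"
  unfolding gibbs_f_def gibbs_Z_def by measurable

lemma gmean_meas[measurable]: "(\<lambda>\<theta>. gibbs_mean Y s \<theta>) \<in> borel_measurable borel"
  unfolding gibbs_mean_def by measurable

definition "Sm = (\<Sum>x\<in>Y. \<bar>s x\<bar>)"

lemma s_le_Sm: assumes "x \<in> Y" shows "\<bar>s x\<bar> \<le> Sm"
  using assms Yfin unfolding Sm_def by (intro member_le_sum) auto

lemma Sm_nonneg: "0 \<le> Sm" unfolding Sm_def by (simp add: sum_nonneg)

lemma gmean_bound: "\<bar>gibbs_mean Y s \<theta>\<bar> \<le> Sm"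
proof -
  have "\<bar>gibbs_mean Y s \<theta>\<bar> \<le> (\<Sum>x\<in>Y. \<bar>s x * gibbs_f Y s x \<theta>\<bar>)"
    unfolding gibbs_mean_def by (rule sum_abs)
  also have "\<dots> \<le> (\<Sum>x\<in>Y. Sm * gibbs_f Y s x \<theta>)"
    using s_le_Sm gf_nonneg by (intro sum_mono) (simp add: abs_mult mult_right_mono)
  also have "\<dots> = Sm" using gf_sum by (simp flip: sum_distrib_left)
  finally show ?thesis .
qed

lemma PiE_weights_sum: fixes N :: nat shows "(\<Sum>ys\<in>PiE {..<N} (\<lambda>_. Y). \<Prod>i<N. gibbs_f Y s (ys i) \<theta>) = 1"
proof -
  have "(\<Prod>i<N. \<Sum>x\<in>Y. gibbs_f Y s x \<theta>) = (\<Sum>ys\<in>PiE {..<N} (\<lambda>_. Y). \<Prod>i<N. gibbs_f Y s (ys i) \<theta>)"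
    by (rule prod_sum_PiE) (use Yfin in auto)
  then show ?thesis using gf_sum by simp
qed

lemma PiE_cross:
  fixes h :: "'a \<Rightarrow> real" and N :: nat
  assumes i: "i < N" and j: "j < N"
  shows "(\<Sum>ys\<in>PiE {..<N} (\<lambda>_. Y). (\<Prod>l<N. gibbs_f Y s (ys l) \<theta>) * (h (ys i) * h (ys j)))
       = (\<Prod>l<N. \<Sum>x\<in>Y. gibbs_f Y s x \<theta> * (if l = i then h x else 1) * (if l = j then h x else 1))"
proof -
  have "(\<Prod>l<N. \<Sum>x\<in>Y. gibbs_f Y s x \<theta> * (if l = i then h x else 1) * (if l = j then h x else 1))
     = (\<Sum>ys\<in>PiE {..<N} (\<lambda>_. Y). \<Prod>l<N. gibbs_f Y s (ys l) \<theta> * (if l = i then h (ys l) else 1) * (if l = j then h (ys l) else 1))"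
    by (rule prod_sum_PiE) (use Yfin in auto)
  also have "\<dots> = (\<Sum>ys\<in>PiE {..<N} (\<lambda>_. Y). (\<Prod>l<N. gibbs_f Y s (ys l) \<theta>) * (h (ys i) * h (ys j)))"
  proof (rule sum.cong[OF refl])
    fix ys
    have "(\<Prod>l<N. gibbs_f Y s (ys l) \<theta> * (if l = i then h (ys l) else 1) * (if l = j then h (ys l) else 1))
      = (\<Prod>l<N. gibbs_f Y s (ys l) \<theta>) * ((\<Prod>l<N. (if l = i then h (ys l) else 1)) * (\<Prod>l<N. (if l = j then h (ys l) else 1)))"
      by (simp add: prod.distrib)
    also have "(\<Prod>l<N. (if l = i then h (ys l) else 1)) = h (ys i)" using i by (simp add: prod.delta)
    also have "(\<Prod>l<N. (if l = j then h (ys l) else 1)) = h (ys j)" using j by (simp add: prod.delta)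
    finally show "(\<Prod>l<N. gibbs_f Y s (ys l) \<theta> * (if l = i then h (ys l) else 1) * (if l = j then h (ys l) else 1))
      = (\<Prod>l<N. gibbs_f Y s (ys l) \<theta>) * (h (ys i) * h (ys j))" .
  qed
  finally show ?thesis by simp
qed

definition "gvar \<theta> = (\<Sum>x\<in>Y. gibbs_f Y s x \<theta> * (s x - gibbs_mean Y s \<theta>)\<^sup>2)"

lemma second_moment: fixes N :: nat shows
  "(\<Sum>ys\<in>PiE {..<N} (\<lambda>_. Y). (\<Prod>l<N. gibbs_f Y s (ys l) \<theta>) * (\<Sum>i<N. s (ys i) - gibbs_mean Y s \<theta>)\<^sup>2)
     = real N * gvar \<theta>"
proof -
  define h where "h x = s x - gibbs_mean Y s \<theta>" for x
  define W where "W ys = (\<Prod>l<N. gibbs_f Y s (ys l) \<theta>)" for ys :: "nat \<Rightarrow> 'a"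
  define P where "P = PiE {..<N} (\<lambda>_. Y)"
  have h0: "(\<Sum>x\<in>Y. gibbs_f Y s x \<theta> * h x) = 0"
  proof -
    have "(\<Sum>x\<in>Y. gibbs_f Y s x \<theta> * h x) = (\<Sum>x\<in>Y. s x * gibbs_f Y s x \<theta>) - gibbs_mean Y s \<theta> * (\<Sum>x\<in>Y. gibbs_f Y s x \<theta>)"
      unfolding h_def by (simp add: right_diff_distrib sum_subtractf sum_distrib_left mult.commute)
    also have "\<dots> = 0" using gf_sum[of \<theta>] unfolding gibbs_mean_def by simp
    finally show ?thesis .
  qed
  have cross: "(\<Sum>ys\<in>P. W ys * (h (ys i) * h (ys j))) = (if i = j then gvar \<theta> else 0)"
    if i: "i < N" and j: "j < N" for i j
  proof -
    have e: "(\<Sum>ys\<in>P. W ys * (h (ys i) * h (ys j)))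
       = (\<Prod>l<N. \<Sum>x\<in>Y. gibbs_f Y s x \<theta> * (if l = i then h x else 1) * (if l = j then h x else 1))"
      unfolding P_def W_def by (rule PiE_cross[OF i j])
    show ?thesis
    proof (cases "i = j")
      case True
      have "(\<Prod>l<N. \<Sum>x\<in>Y. gibbs_f Y s x \<theta> * (if l = i then h x else 1) * (if l = j then h x else 1))
        = (\<Prod>l<N. if l = i then (\<Sum>x\<in>Y. gibbs_f Y s x \<theta> * (h x)\<^sup>2) else 1)"
        using True gf_sum by (intro prod.cong) (auto simp: power2_eq_square mult.assoc)
      also have "\<dots> = (\<Sum>x\<in>Y. gibbs_f Y s x \<theta> * (h x)\<^sup>2)" using i by (simp add: prod.delta)
      finally show ?thesis using e True unfolding gvar_def h_def by simp
    next
      case False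
      have "(\<Prod>l<N. \<Sum>x\<in>Y. gibbs_f Y s x \<theta> * (if l = i then h x else 1) * (if l = j then h x else 1)) = 0"
      proof (rule prod_zero)
        show "\<exists>l\<in>{..<N}. (\<Sum>x\<in>Y. gibbs_f Y s x \<theta> * (if l = i then h x else 1) * (if l = j then h x else 1)) = 0"
          using i False h0 by (intro bexI[of _ i]) auto
      qed simp
      then show ?thesis using e False by simp
    qed
  qed
  have "(\<Sum>ys\<in>P. W ys * (\<Sum>i<N. h (ys i))\<^sup>2) = (\<Sum>ys\<in>P. \<Sum>i<N. \<Sum>j<N. W ys * (h (ys i) * h (ys j)))"
    unfolding power2_eq_square sum_product by (simp add: sum_distrib_left)
  also have "\<dots> = (\<Sum>i<N. \<Sum>ys\<in>P. \<Sum>j<N. W ys * (h (ys i) * h (ys j)))"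
    by (rule sum.swap)
  also have "\<dots> = (\<Sum>i<N. \<Sum>j<N. \<Sum>ys\<in>P. W ys * (h (ys i) * h (ys j)))"
    by (rule sum.cong[OF refl], rule sum.swap)
  also have "\<dots> = (\<Sum>i<N. \<Sum>j<N. if i = j then gvar \<theta> else 0)"
    using cross by (intro sum.cong refl) auto
  also have "\<dots> = real N * gvar \<theta>" by simp
  finally show ?thesis unfolding W_def P_def h_def .
qed

lemma gvar_bound: "gvar \<theta> \<le> 4 * Sm\<^sup>2"
proof -
  have "gvar \<theta> \<le> (\<Sum>x\<in>Y. gibbs_f Y s x \<theta> * (4 * Sm\<^sup>2))"
    unfolding gvar_def
  proof (intro sum_mono mult_left_mono gf_nonneg)
    fix x assume x: "x \<in> Y"
    have "\<bar>s x - gibbs_mean Y s \<theta>\<bar> \<le> 2 * Sm" using s_le_Sm[OF x] gmean_bound[of \<theta>] by arith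
    then have "\<bar>s x - gibbs_mean Y s \<theta>\<bar>\<^sup>2 \<le> (2 * Sm)\<^sup>2" by (rule power_mono) simp
    then show "(s x - gibbs_mean Y s \<theta>)\<^sup>2 \<le> 4 * Sm\<^sup>2" by (simp add: power_mult_distrib)
  qed
  also have "\<dots> = 4 * Sm\<^sup>2" using gf_sum by (simp flip: sum_distrib_right)
  finally show ?thesis .
qed

lemma abs_le_quad: fixes z c :: real assumes "0 < c" shows "\<bar>z\<bar> \<le> z\<^sup>2 / (2 * c) + c / 2"
proof -
  have "0 \<le> (\<bar>z\<bar> - c)\<^sup>2" by simp
  then have "2 * c * \<bar>z\<bar> \<le> z\<^sup>2 + c\<^sup>2" by (simp add: power2_eq_square algebra_simps)
  then show ?thesis using assms by (simp add: field_simps power2_eq_square)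
qed

lemma lln_bound:
  assumes N: "1 \<le> N"
  shows "(\<Sum>ys\<in>PiE {..<N} (\<lambda>_. Y). (\<Prod>l<N. gibbs_f Y s (ys l) \<theta>) * \<bar>(\<Sum>i<N. s (ys i)) / real N - gibbs_mean Y s \<theta>\<bar>)
     \<le> (4 * Sm\<^sup>2 + 1) / (2 * sqrt (real N))"
proof -
  define P where "P = PiE {..<N} (\<lambda>_. Y)"
  define W where "W ys = (\<Prod>l<N. gibbs_f Y s (ys l) \<theta>)" for ys :: "nat \<Rightarrow> 'a"
  define T where "T ys = (\<Sum>i<N. s (ys i) - gibbs_mean Y s \<theta>)" for ys
  define c where "c = 1 / sqrt (real N)"
  have Np: "0 < real N" using N by simp
  have c: "0 < c" unfolding c_def using Np by simp
  have W0: "0 \<le> W ys" for ys unfolding W_def by (intro prod_nonneg) (simp add: gf_nonneg)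
  have eq: "(\<Sum>i<N. s (ys i)) / real N - gibbs_mean Y s \<theta> = T ys / real N" for ys
    unfolding T_def using Np by (simp add: sum_subtractf field_simps)
  have "(\<Sum>ys\<in>P. W ys * \<bar>(\<Sum>i<N. s (ys i)) / real N - gibbs_mean Y s \<theta>\<bar>)
      \<le> (\<Sum>ys\<in>P. W ys * ((T ys / real N)\<^sup>2 / (2 * c) + c / 2))"
    unfolding eq by (intro sum_mono mult_left_mono W0 abs_le_quad c)
  also have "\<dots> = (\<Sum>ys\<in>P. W ys * (T ys)\<^sup>2) / (real N ^ 2 * (2 * c)) + c / 2 * (\<Sum>ys\<in>P. W ys)"
    by (simp add: sum_distrib_left sum_distrib_right sum.distrib power_divide algebra_simps sum_divide_distrib)
  also have "(\<Sum>ys\<in>P. W ys) = 1" unfolding P_def W_def by (rule PiE_weights_sum)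
  also have "(\<Sum>ys\<in>P. W ys * (T ys)\<^sup>2) = real N * gvar \<theta>"
    unfolding P_def W_def T_def by (rule second_moment)
  also have "real N * gvar \<theta> / (real N ^ 2 * (2 * c)) + c / 2 * 1 = (gvar \<theta> + 1) / (2 * sqrt (real N))"
  proof -
    have "sqrt (real N) * sqrt (real N) = real N" using Np by simp
    then show ?thesis unfolding c_def using Np by (simp add: field_simps power2_eq_square)
  qed
  also have "\<dots> \<le> (4 * Sm\<^sup>2 + 1) / (2 * sqrt (real N))"
    using gvar_bound[of \<theta>] Np by (intro divide_right_mono) auto
  finally show ?thesis unfolding P_def W_def .
qed

end

lemma inv_sqrt_lim: "(\<lambda>N. C / sqrt (real N)) \<longlonglongrightarrow> 0"
proof (rule tendsto_divide_0[OF tendsto_const])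
  show "filterlim (\<lambda>N. sqrt (real N)) at_infinity sequentially"
    by (rule filterlim_at_top_imp_at_infinity, rule filterlim_compose[OF sqrt_at_top filterlim_real_sequentially])
qed

theorem theorem4:
  fixes Y :: "'a set" and s :: "'a \<Rightarrow> real" and y :: 'a
    and \<sigma>0 \<Sigma> :: real
  assumes "finite Y" and "y \<in> Y"
    and "\<sigma>0 > 0" and "\<Sigma> > 0" and "\<Sigma> < \<sigma>0\<^sup>2"
  shows "\<exists>\<pi>\<Sigma>. geom_ergodic_to (langevin_kernel Y s y \<sigma>0 \<Sigma>) \<pi>\<Sigma> \<and>
           (\<exists>\<pi>N :: nat \<Rightarrow> real measure. \<exists>N0 \<ge> 1.
              (\<forall>N \<ge> N0. geom_ergodic_to (noisy_langevin_kernel Y s y \<sigma>0 \<Sigma> N) (\<pi>N N)) \<and>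
              (\<lambda>N. tv_dist \<pi>\<Sigma> (\<pi>N N)) \<longlonglongrightarrow> 0)"
proof -
  note fin = assms(1)
  have Yne: "Y \<noteq> {}" using assms(2) by auto
  have S: "0 < \<Sigma>" using assms(4) .
  have sig2: "0 < \<sigma>0\<^sup>2" using assms(3) by simp
  define a where "a = 1 - \<Sigma> / (2 * \<sigma>0\<^sup>2)"
  have a: "0 \<le> a" "a < 1"
  proof -
    have "\<Sigma> < 2 * \<sigma>0\<^sup>2" using assms(5) sig2 by linarith
    then have "\<Sigma> / (2 * \<sigma>0\<^sup>2) < 1" using sig2 by (simp add: divide_less_eq)
    moreover have "0 < \<Sigma> / (2 * \<sigma>0\<^sup>2)" using S sig2 by simp
    ultimately show "0 \<le> a" "a < 1" unfolding a_def by auto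
  qed
  define Sm0 where "Sm0 = Sm Y s"
  have sY: "\<And>x. x \<in> Y \<Longrightarrow> \<bar>s x\<bar> \<le> Sm0" unfolding Sm0_def by (rule s_le_Sm[OF fin Yne])
  have Sm0: "0 \<le> Sm0" unfolding Sm0_def by (rule Sm_nonneg[OF fin Yne])
  have gmb: "\<bar>gibbs_mean Y s \<theta>\<bar> \<le> Sm0" for \<theta> unfolding Sm0_def by (rule gmean_bound[OF fin Yne])
  define D where "D = \<Sigma> * Sm0"
  have D: "0 \<le> D" unfolding D_def using S Sm0 by simp
  define mE where "mE \<theta> = \<theta> + \<Sigma> / 2 * grad_log_post Y s y \<sigma>0 \<theta>" for \<theta>
  define W where "W N ys \<theta> = (\<Prod>i<N. gibbs_f Y s (ys i) \<theta>)" for N :: nat and ys :: "nat \<Rightarrow> 'a" and \<theta>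
  define mN where "mN N ys \<theta> = \<theta> + \<Sigma> / 2 * (- \<theta> / \<sigma>0\<^sup>2 + s y - (\<Sum>i<N. s (ys i)) / real N)"
    for N and ys :: "nat \<Rightarrow> 'a" and \<theta>
  define kE where "kE \<theta> t = normal_density (mE \<theta>) (sqrt \<Sigma>) t" for \<theta> t
  define kN where "kN N \<theta> t = (\<Sum>ys\<in>PiE {..<N} (\<lambda>_. Y). W N ys \<theta> * normal_density (mN N ys \<theta>) (sqrt \<Sigma>) t)"
    for N \<theta> t
  have LE: "langevin_kernel Y s y \<sigma>0 \<Sigma> = Kd kE"
    by (simp add: fun_eq_iff langevin_kernel_def Kd_def kE_def mE_def)
  have LN: "noisy_langevin_kernel Y s y \<sigma>0 \<Sigma> N = Kd (kN N)" for N
    by (simp add: fun_eq_iff noisy_langevin_kernel_def Kd_def kN_def mN_def W_def)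
  have mE_meas[measurable]: "mE \<in> borel_measurable borel"
    unfolding mE_def grad_log_post_def using gmean_meas[OF fin Yne] by measurable
  have mEa: "\<bar>mE \<theta> - a * \<theta>\<bar> \<le> D" for \<theta>
  proof -
    have "mE \<theta> - a * \<theta> = \<Sigma> / 2 * (s y - gibbs_mean Y s \<theta>)"
      unfolding mE_def a_def grad_log_post_def using sig2 by (simp add: field_simps)
    also have "\<bar>\<dots>\<bar> \<le> \<Sigma> / 2 * (2 * Sm0)"
    proof -
      have "\<bar>s y - gibbs_mean Y s \<theta>\<bar> \<le> 2 * Sm0" using sY[OF assms(2)] gmb[of \<theta>] by arith
      then show ?thesis using S by (simp add: abs_mult mult_left_mono)
    qed
    finally show ?thesis unfolding D_def by simp
  qed
  have avg: "\<bar>(\<Sum>i<N. s (ys i)) / real N\<bar> \<le> Sm0" if "ys \<in> PiE {..<N} (\<lambda>_. Y)" "1 \<le> N" for N ys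
  proof -
    have "\<bar>\<Sum>i<N. s (ys i)\<bar> \<le> (\<Sum>i<N. Sm0)"
      using that sY by (intro sum_abs[THEN order_trans] sum_mono) (auto simp: PiE_def Pi_def)
    then show ?thesis using that(2) by (simp add: divide_le_eq mult.commute)
  qed
  have mNa: "\<bar>mN N ys \<theta> - a * \<theta>\<bar> \<le> D" if "ys \<in> PiE {..<N} (\<lambda>_. Y)" "1 \<le> N" for N ys \<theta>
  proof -
    have "mN N ys \<theta> - a * \<theta> = \<Sigma> / 2 * (s y - (\<Sum>i<N. s (ys i)) / real N)"
      unfolding mN_def a_def using sig2 by (simp add: field_simps)
    also have "\<bar>\<dots>\<bar> \<le> \<Sigma> / 2 * (2 * Sm0)"
    proof -
      have "\<bar>s y - (\<Sum>i<N. s (ys i)) / real N\<bar> \<le> 2 * Sm0" using sY[OF assms(2)] avg[OF that] by arith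
      then show ?thesis using S by (simp add: abs_mult mult_left_mono)
    qed
    finally show ?thesis unfolding D_def by simp
  qed
  define \<gamma> where "\<gamma> = gC a"
  define b where "b = bC a D \<Sigma>"
  define R where "R = RC a D \<Sigma>"
  define \<alpha> where "\<alpha> = alC a D \<Sigma>"
  define nd where "nd = ndC \<Sigma>"
  have gE: "gekernel kE \<gamma> b R \<alpha> nd"
    unfolding \<gamma>_def b_def R_def \<alpha>_def nd_def
  proof (rule mixture_gekernel[where J="UNIV :: unit set" and w="\<lambda>_ _. 1" and m="\<lambda>_. mE"])
    show "kE \<theta> t = (\<Sum>j\<in>(UNIV :: unit set). 1 * normal_density (mE \<theta>) (sqrt \<Sigma>) t)" for \<theta> t
      by (simp add: kE_def)
  qed (use a D S mEa in auto)
  have gN: "gekernel (kN N) \<gamma> b R \<alpha> nd" if N: "1 \<le> N" for N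
    unfolding \<gamma>_def b_def R_def \<alpha>_def nd_def
  proof (rule mixture_gekernel[where J="PiE {..<N} (\<lambda>_. Y)" and w="W N" and m="mN N"])
    show "finite (PiE {..<N} (\<lambda>_. Y))" using fin by (simp add: finite_PiE)
    show "0 \<le> W N j \<theta>" for j \<theta> unfolding W_def by (intro prod_nonneg) (simp add: gf_nonneg[OF fin Yne])
    show "(\<Sum>j\<in>PiE {..<N} (\<lambda>_. Y). W N j \<theta>) = 1" for \<theta> unfolding W_def by (rule PiE_weights_sum[OF fin Yne])
    show "\<bar>mN N j \<theta> - a * \<theta>\<bar> \<le> D" if "j \<in> PiE {..<N} (\<lambda>_. Y)" for j \<theta> by (rule mNa[OF that N])
    show "W N j \<in> borel_measurable borel" for j unfolding W_def using gf_meas[OF fin Yne] by measurable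
    show "mN N j \<in> borel_measurable borel" for j unfolding mN_def by measurable
    show "kN N \<theta> t = (\<Sum>j\<in>PiE {..<N} (\<lambda>_. Y). W N j \<theta> * normal_density (mN N j \<theta>) (sqrt \<Sigma>) t)" for \<theta> t
      by (simp add: kN_def)
  qed (use a D S in auto)
  interpret E: gekernel kE \<gamma> b R \<alpha> nd by (rule gE)
  define \<pi>N where "\<pi>N N = (if 1 \<le> N then gekernel.pim (kN N) else E.pim)" for N
  have ergE: "geom_ergodic_to (langevin_kernel Y s y \<sigma>0 \<Sigma>) E.pim" unfolding LE by (rule E.ergodic)
  have ergN: "geom_ergodic_to (noisy_langevin_kernel Y s y \<sigma>0 \<Sigma> N) (\<pi>N N)" if "1 \<le> N" for N
    unfolding LN \<pi>N_def using gekernel.ergodic[OF gN[OF that]] that by simp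
  define \<epsilon> where "\<epsilon> N = cG D \<Sigma> * (\<Sigma> / 2) * ((4 * Sm0\<^sup>2 + 1) / (2 * sqrt (real N)))" for N :: nat
  have cG0: "0 \<le> cG D \<Sigma>" unfolding cG_def using S D by simp
  have pert: "\<bar>Pop (kN N) \<psi> \<theta> - Pop kE \<psi> \<theta>\<bar> \<le> \<epsilon> N" if N: "1 \<le> N" and p: "bm 1 \<psi>" for N \<psi> \<theta>
  proof -
    have md: "\<bar>mN N ys \<theta> - mE \<theta>\<bar> \<le> D" if "ys \<in> PiE {..<N} (\<lambda>_. Y)" for ys
    proof -
      have "mN N ys \<theta> - mE \<theta> = \<Sigma> / 2 * (gibbs_mean Y s \<theta> - (\<Sum>i<N. s (ys i)) / real N)"
        unfolding mN_def mE_def grad_log_post_def by (simp add: algebra_simps)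
      also have "\<bar>\<dots>\<bar> \<le> \<Sigma> / 2 * (2 * Sm0)"
      proof -
        have "\<bar>gibbs_mean Y s \<theta> - (\<Sum>i<N. s (ys i)) / real N\<bar> \<le> 2 * Sm0" using gmb[of \<theta>] avg[OF that N] by arith
        then show ?thesis using S by (simp add: abs_mult mult_left_mono)
      qed
      finally show ?thesis unfolding D_def by simp
    qed
    have "\<bar>Pop (kN N) \<psi> \<theta> - Pop kE \<psi> \<theta>\<bar>
        \<le> cG D \<Sigma> * (\<Sum>ys\<in>PiE {..<N} (\<lambda>_. Y). W N ys \<theta> * \<bar>mN N ys \<theta> - mE \<theta>\<bar>)"
      unfolding Pop_def kN_def kE_def
    proof (rule mix_pert[OF _ _ _ md S p])
      show "finite (PiE {..<N} (\<lambda>_. Y))" using fin by (simp add: finite_PiE)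
      show "0 \<le> W N j \<theta>" for j unfolding W_def by (intro prod_nonneg) (simp add: gf_nonneg[OF fin Yne])
      show "(\<Sum>j\<in>PiE {..<N} (\<lambda>_. Y). W N j \<theta>) = 1" unfolding W_def by (rule PiE_weights_sum[OF fin Yne])
    qed
    also have "(\<Sum>ys\<in>PiE {..<N} (\<lambda>_. Y). W N ys \<theta> * \<bar>mN N ys \<theta> - mE \<theta>\<bar>)
       = \<Sigma> / 2 * (\<Sum>ys\<in>PiE {..<N} (\<lambda>_. Y). W N ys \<theta> * \<bar>(\<Sum>i<N. s (ys i)) / real N - gibbs_mean Y s \<theta>\<bar>)"
    proof -
      have "\<bar>mN N ys \<theta> - mE \<theta>\<bar> = \<Sigma> / 2 * \<bar>(\<Sum>i<N. s (ys i)) / real N - gibbs_mean Y s \<theta>\<bar>" for ys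
      proof -
        have "mN N ys \<theta> - mE \<theta> = \<Sigma> / 2 * (gibbs_mean Y s \<theta> - (\<Sum>i<N. s (ys i)) / real N)"
          unfolding mN_def mE_def grad_log_post_def by (simp add: algebra_simps)
        then have "\<bar>mN N ys \<theta> - mE \<theta>\<bar> = \<bar>\<Sigma> / 2 * (gibbs_mean Y s \<theta> - (\<Sum>i<N. s (ys i)) / real N)\<bar>"
          by (simp only:)
        also have "\<dots> = \<Sigma> / 2 * \<bar>(\<Sum>i<N. s (ys i)) / real N - gibbs_mean Y s \<theta>\<bar>"
          using S by (simp add: abs_mult abs_minus_commute)
        finally show ?thesis .
      qed
      note eqys = this
      have "(\<Sum>ys\<in>PiE {..<N} (\<lambda>_. Y). W N ys \<theta> * \<bar>mN N ys \<theta> - mE \<theta>\<bar>)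
        = (\<Sum>ys\<in>PiE {..<N} (\<lambda>_. Y). \<Sigma> / 2 * (W N ys \<theta> * \<bar>(\<Sum>i<N. s (ys i)) / real N - gibbs_mean Y s \<theta>\<bar>))"
        by (intro sum.cong refl) (simp only: eqys mult.left_commute)
      also have "\<dots> = \<Sigma> / 2 * (\<Sum>ys\<in>PiE {..<N} (\<lambda>_. Y). W N ys \<theta> * \<bar>(\<Sum>i<N. s (ys i)) / real N - gibbs_mean Y s \<theta>\<bar>)"
        by (rule sum_distrib_left[symmetric])
      finally show ?thesis .
    qed
    also have "\<dots> \<le> \<Sigma> / 2 * ((4 * (Sm Y s)\<^sup>2 + 1) / (2 * sqrt (real N)))"
      using lln_bound[OF fin Yne N, where \<theta>=\<theta>] S unfolding W_def by (intro mult_left_mono) auto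
    finally show ?thesis unfolding \<epsilon>_def Sm0_def using cG0 by (simp add: mult_left_mono mult.assoc)
  qed
  have dE: "dkernel kE" by (rule E.dkernel_axioms)
  have dN: "dkernel (kN N)" if "1 \<le> N" for N using gekernel.axioms(1)[OF gN[OF that]] .
  have C0eq: "gekernel.C0 \<gamma> b R \<alpha> = E.C0" by simp
  have abd: "0 < E.ab" "E.ab < 1" by (rule E.ab)+
  have bnd: "\<bar>measure E.pim A - measure (\<pi>N N) A\<bar> \<le> 2 * E.C0 * E.ab ^ n + real n * \<epsilon> N"
    if N: "1 \<le> N" and A: "A \<in> sets borel" for N n A
  proof -
    have b1: "bm 1 (indicator A :: real \<Rightarrow> real)" using A by (auto simp: bm_def)
    have t: "\<bar>(Pop (kN N) ^^ n) (indicator A) 0 - (Pop kE ^^ n) (indicator A) 0\<bar> \<le> real n * \<epsilon> N"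
      by (rule telescope[OF dN[OF N] dE pert[OF N] b1])
    have e1: "\<bar>(Pop kE ^^ n) (indicator A) 0 - measure E.pim A\<bar> \<le> E.C0 * E.ab ^ n"
      by (rule E.pim_bound0[OF A])
    have e2: "\<bar>(Pop (kN N) ^^ n) (indicator A) 0 - measure (\<pi>N N) A\<bar> \<le> E.C0 * E.ab ^ n"
      using gekernel.pim_bound0[OF gN[OF N] A, of n] N unfolding \<pi>N_def by simp
    from t e1 e2 show ?thesis by linarith
  qed
  have tvb: "tv_dist E.pim (\<pi>N N) \<le> 2 * E.C0 * E.ab ^ n + real n * \<epsilon> N" if N: "1 \<le> N" for N n
    unfolding tv_dist_def by (rule cSUP_least) (use bnd[OF N] in auto)
  have tv0: "0 \<le> tv_dist E.pim (\<pi>N N)" if N: "1 \<le> N" for N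
  proof -
    have bdd: "bdd_above ((\<lambda>A. \<bar>measure E.pim A - measure (\<pi>N N) A\<bar>) ` sets borel)"
      using bnd[OF N, of _ 0] by (intro bdd_aboveI2) auto
    have "\<bar>measure E.pim {} - measure (\<pi>N N) {}\<bar> \<le> tv_dist E.pim (\<pi>N N)"
      unfolding tv_dist_def by (rule cSUP_upper[OF _ bdd]) simp
    then show ?thesis by simp
  qed
  have lim: "(\<lambda>N. tv_dist E.pim (\<pi>N N)) \<longlonglongrightarrow> 0"
    unfolding LIMSEQ_iff
  proof (intro allI impI)
    fix r :: real assume r: "0 < r"
    from E.ab_pow_lim[of "2 * E.C0"] have "eventually (\<lambda>n. 2 * E.C0 * E.ab ^ n < r / 2) sequentially"
      using r by (intro order_tendstoD) auto
    then obtain n where n: "2 * E.C0 * E.ab ^ n < r / 2" by (auto simp: eventually_sequentially)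
    have "(\<lambda>N. real n * (cG D \<Sigma> * (\<Sigma> / 2) * (4 * Sm0\<^sup>2 + 1) / 2) / sqrt (real N)) \<longlonglongrightarrow> 0"
      by (rule inv_sqrt_lim)
    moreover have "(\<lambda>N. real n * (cG D \<Sigma> * (\<Sigma> / 2) * (4 * Sm0\<^sup>2 + 1) / 2) / sqrt (real N)) = (\<lambda>N. real n * \<epsilon> N)"
      unfolding \<epsilon>_def by (auto simp: fun_eq_iff field_simps)
    ultimately have "(\<lambda>N. real n * \<epsilon> N) \<longlonglongrightarrow> 0" by simp
    then have "eventually (\<lambda>N. real n * \<epsilon> N < r / 2) sequentially"
      using r by (intro order_tendstoD) auto
    then obtain M where M: "\<And>N. M \<le> N \<Longrightarrow> real n * \<epsilon> N < r / 2" by (auto simp: eventually_sequentially)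
    show "\<exists>no. \<forall>N\<ge>no. norm (tv_dist E.pim (\<pi>N N) - 0) < r"
    proof (intro exI[of _ "max M 1"] allI impI)
      fix N assume "max M 1 \<le> N"
      then have N: "1 \<le> N" "M \<le> N" by auto
      have "tv_dist E.pim (\<pi>N N) < r" using tvb[OF N(1), of n] M[OF N(2)] n by linarith
      then show "norm (tv_dist E.pim (\<pi>N N) - 0) < r" using tv0[OF N(1)] by simp
    qed
  qed
  show ?thesis
    using ergE ergN lim by (intro exI[of _ E.pim] conjI exI[of _ \<pi>N] exI[of _ "1::nat"]) auto
qed

end
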